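(* Let $R$ be a commutative ring with unit, let $E$ be an $R$-module and $E^*=\mathrm{Hom}_R(E,R)$. Then the quasi-coherent $R$-module associated with $E^*$, i.e. the functor $B\mapsto E^*\otimes_R B$, coincides (via the canonical morphism) with the dual functor $\mathbf{E}^*$ if and only if $E$ is a projective $R$-module of finite type.
   Context: All functors are covariant functors on the category of commutative $R$-algebras. For an $R$-module $M$, $\mathbf{M}$ denotes the functor of $R$-modules $B\mapsto M\otimes_R B$ (a quasi-coherent $R$-module); $\mathbf{R}$ is $B\mapsto B$. For functors of $R$-modules $F,H$, $\mathbf{Hom}_R(F,H)$ is the functor $B\mapsto \mathrm{Hom}_B(F_{|B},H_{|B})$, where $F_{|B}$ is the restriction of $F$ to commutative $B$-algebras, and $F^*:=\mathbf{Hom}_R(F,\mathbf{R})$. Thus $\mathbf{E}^*(B)=\mathrm{Hom}_B(\mathbf{E}_{|B},\mathbf{R}_{|B})$, which is identified with $\mathrm{Hom}_R(E,B)$; the canonical morphism from $B\mapsto E^*\otimes_R B$ to $\mathbf{E}^*$ sends $w\otimes b$ to $e\mapsto w(e)b$. *)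

theory Defs
  imports "HOL-Algebra.Module" "HOL-Algebra.RingHom"
begin

definition dual_mod :: "('r, 'c) ring_scheme \<Rightarrow> ('r, 'e, 'd) module_scheme \<Rightarrow> ('e \<Rightarrow> 'r) set" where
  "dual_mod R E = {w. w \<in> extensional (carrier E) \<and> w \<in> carrier E \<rightarrow> carrier R
      \<and> (\<forall>x\<in>carrier E. \<forall>y\<in>carrier E. w (x \<oplus>\<^bsub>E\<^esub> y) = w x \<oplus>\<^bsub>R\<^esub> w y)
      \<and> (\<forall>a\<in>carrier R. \<forall>x\<in>carrier E. w (a \<odot>\<^bsub>E\<^esub> x) = a \<otimes>\<^bsub>R\<^esub> w x)}"

text \<open>A commutative R-algebra is a commutative ring B with a structure ring
  homomorphism phi : R -> B. Hom_R(E,B) = R-linear maps E -> B (extensional),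
  where r acts on B by multiplication with phi r.\<close>
definition hom_to_alg :: "('r, 'c) ring_scheme \<Rightarrow> ('r, 'e, 'd) module_scheme \<Rightarrow> ('b, 'f) ring_scheme
    \<Rightarrow> ('r \<Rightarrow> 'b) \<Rightarrow> ('e \<Rightarrow> 'b) set" where
  "hom_to_alg R E B phi = {f. f \<in> extensional (carrier E) \<and> f \<in> carrier E \<rightarrow> carrier B
      \<and> (\<forall>x\<in>carrier E. \<forall>y\<in>carrier E. f (x \<oplus>\<^bsub>E\<^esub> y) = f x \<oplus>\<^bsub>B\<^esub> f y)
      \<and> (\<forall>a\<in>carrier R. \<forall>x\<in>carrier E. f (a \<odot>\<^bsub>E\<^esub> x) = phi a \<otimes>\<^bsub>B\<^esub> f x)}"

text \<open>Free abelian group on the set E* x B (finitely supported integer functions).\<close>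
definition tensor_free :: "('r, 'c) ring_scheme \<Rightarrow> ('r, 'e, 'd) module_scheme \<Rightarrow> ('b, 'f) ring_scheme
    \<Rightarrow> ((('e \<Rightarrow> 'r) \<times> 'b) \<Rightarrow> int) set" where
  "tensor_free R E B = {c. finite {p. c p \<noteq> 0} \<and> {p. c p \<noteq> 0} \<subseteq> dual_mod R E \<times> carrier B}"

definition delta :: "'a \<Rightarrow> 'a \<Rightarrow> int" where
  "delta p = (\<lambda>q. if q = p then 1 else 0)"

definition tensor_gens :: "('r, 'c) ring_scheme \<Rightarrow> ('r, 'e, 'd) module_scheme \<Rightarrow> ('b, 'f) ring_scheme
    \<Rightarrow> ('r \<Rightarrow> 'b) \<Rightarrow> ((('e \<Rightarrow> 'r) \<times> 'b) \<Rightarrow> int) set" where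
  "tensor_gens R E B phi =
     {(\<lambda>q. delta (restrict (\<lambda>x. w x \<oplus>\<^bsub>R\<^esub> w' x) (carrier E), b) q - delta (w, b) q - delta (w', b) q)
        | w w' b. w \<in> dual_mod R E \<and> w' \<in> dual_mod R E \<and> b \<in> carrier B}
   \<union> {(\<lambda>q. delta (w, b \<oplus>\<^bsub>B\<^esub> b') q - delta (w, b) q - delta (w, b') q)
        | w b b'. w \<in> dual_mod R E \<and> b \<in> carrier B \<and> b' \<in> carrier B}
   \<union> {(\<lambda>q. delta (restrict (\<lambda>x. a \<otimes>\<^bsub>R\<^esub> w x) (carrier E), b) q - delta (w, phi a \<otimes>\<^bsub>B\<^esub> b) q)
        | a w b. a \<in> carrier R \<and> w \<in> dual_mod R E \<and> b \<in> carrier B}"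

inductive_set tensor_rel :: "('r, 'c) ring_scheme \<Rightarrow> ('r, 'e, 'd) module_scheme \<Rightarrow> ('b, 'f) ring_scheme
    \<Rightarrow> ('r \<Rightarrow> 'b) \<Rightarrow> ((('e \<Rightarrow> 'r) \<times> 'b) \<Rightarrow> int) set"
  for R E B phi where
  zero: "(\<lambda>q. 0) \<in> tensor_rel R E B phi"
| gen: "g \<in> tensor_gens R E B phi \<Longrightarrow> g \<in> tensor_rel R E B phi"
| diff: "x \<in> tensor_rel R E B phi \<Longrightarrow> y \<in> tensor_rel R E B phi
          \<Longrightarrow> (\<lambda>q. x q - y q) \<in> tensor_rel R E B phi"

definition tensor_dual :: "('r, 'c) ring_scheme \<Rightarrow> ('r, 'e, 'd) module_scheme \<Rightarrow> ('b, 'f) ring_scheme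
    \<Rightarrow> ('r \<Rightarrow> 'b) \<Rightarrow> ((('e \<Rightarrow> 'r) \<times> 'b) \<Rightarrow> int) set set" where
  "tensor_dual R E B phi = tensor_free R E B //
     {(c, c'). c \<in> tensor_free R E B \<and> c' \<in> tensor_free R E B
               \<and> (\<lambda>q. c q - c' q) \<in> tensor_rel R E B phi}"

definition canon_rep :: "('r, 'c) ring_scheme \<Rightarrow> ('r, 'e, 'd) module_scheme \<Rightarrow> ('b, 'f) ring_scheme
    \<Rightarrow> ('r \<Rightarrow> 'b) \<Rightarrow> ((('e \<Rightarrow> 'r) \<times> 'b) \<Rightarrow> int) \<Rightarrow> ('e \<Rightarrow> 'b)" where
  "canon_rep R E B phi c = restrict (\<lambda>x. \<Oplus>\<^bsub>B\<^esub>p\<in>{p. c p \<noteq> 0}.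
        add_pow B (c p) (phi (fst p x) \<otimes>\<^bsub>B\<^esub> snd p)) (carrier E)"

definition canon_map :: "('r, 'c) ring_scheme \<Rightarrow> ('r, 'e, 'd) module_scheme \<Rightarrow> ('b, 'f) ring_scheme
    \<Rightarrow> ('r \<Rightarrow> 'b) \<Rightarrow> ((('e \<Rightarrow> 'r) \<times> 'b) \<Rightarrow> int) set \<Rightarrow> ('e \<Rightarrow> 'b)" where
  "canon_map R E B phi X = the_elem (canon_rep R E B phi ` X)"

definition canon_iso :: "('r, 'c) ring_scheme \<Rightarrow> ('r, 'e, 'd) module_scheme \<Rightarrow> ('b, 'f) ring_scheme
    \<Rightarrow> ('r \<Rightarrow> 'b) \<Rightarrow> bool" where
  "canon_iso R E B phi \<longleftrightarrow>
     bij_betw (canon_map R E B phi) (tensor_dual R E B phi) (hom_to_alg R E B phi)"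

definition fin_type :: "('r, 'c) ring_scheme \<Rightarrow> ('r, 'e, 'd) module_scheme \<Rightarrow> bool" where
  "fin_type R E \<longleftrightarrow> (\<exists>A. finite A \<and> A \<subseteq> carrier E \<and>
     (\<forall>x\<in>carrier E. \<exists>c. c \<in> A \<rightarrow> carrier R \<and> x = (\<Oplus>\<^bsub>E\<^esub>a\<in>A. c a \<odot>\<^bsub>E\<^esub> a)))"

definition free_mod :: "('r, 'c) ring_scheme \<Rightarrow> 'i set \<Rightarrow> ('i \<Rightarrow> 'r) set" where
  "free_mod R I = {g. g \<in> extensional I \<and> g \<in> I \<rightarrow> carrier R \<and> finite {i\<in>I. g i \<noteq> \<zero>\<^bsub>R\<^esub>}}"

text \<open>The index set is taken in the type of elements of E (any module is a quotient
  of the free module on its own elements, so this is no restriction).\<close>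
definition projective_mod :: "('r, 'c) ring_scheme \<Rightarrow> ('r, 'e, 'd) module_scheme \<Rightarrow> bool" where
  "projective_mod R E \<longleftrightarrow> (\<exists>(I::'e set) s p.
      s \<in> carrier E \<rightarrow> free_mod R I \<and> p \<in> free_mod R I \<rightarrow> carrier E
    \<and> (\<forall>x\<in>carrier E. \<forall>y\<in>carrier E. s (x \<oplus>\<^bsub>E\<^esub> y) = restrict (\<lambda>i. s x i \<oplus>\<^bsub>R\<^esub> s y i) I)
    \<and> (\<forall>a\<in>carrier R. \<forall>x\<in>carrier E. s (a \<odot>\<^bsub>E\<^esub> x) = restrict (\<lambda>i. a \<otimes>\<^bsub>R\<^esub> s x i) I)
    \<and> (\<forall>g\<in>free_mod R I. \<forall>h\<in>free_mod R I. p (restrict (\<lambda>i. g i \<oplus>\<^bsub>R\<^esub> h i) I) = p g \<oplus>\<^bsub>E\<^esub> p h)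
    \<and> (\<forall>a\<in>carrier R. \<forall>g\<in>free_mod R I. p (restrict (\<lambda>i. a \<otimes>\<^bsub>R\<^esub> g i) I) = a \<odot>\<^bsub>E\<^esub> p g)
    \<and> (\<forall>x\<in>carrier E. p (s x) = x))"

end

theory Submission
  imports Defs
begin

context module
begin

lemma dual_memD:
  assumes "w \<in> dual_mod R M"
  shows "w \<in> extensional (carrier M)" "\<And>x. x \<in> carrier M \<Longrightarrow> w x \<in> carrier R"
    "\<And>x y. x \<in> carrier M \<Longrightarrow> y \<in> carrier M \<Longrightarrow> w (x \<oplus>\<^bsub>M\<^esub> y) = w x \<oplus> w y"
    "\<And>a x. a \<in> carrier R \<Longrightarrow> x \<in> carrier M \<Longrightarrow> w (a \<odot>\<^bsub>M\<^esub> x) = a \<otimes> w x"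
  using assms unfolding dual_mod_def by auto

lemma dual_zero:
  assumes "w \<in> dual_mod R M" shows "w \<zero>\<^bsub>M\<^esub> = \<zero>"
proof -
  have z: "\<zero> \<odot>\<^bsub>M\<^esub> \<zero>\<^bsub>M\<^esub> = \<zero>\<^bsub>M\<^esub>" by simp
  have c: "w \<zero>\<^bsub>M\<^esub> \<in> carrier R" using dual_memD(2)[OF assms M.zero_closed] .
  have "w \<zero>\<^bsub>M\<^esub> = w (\<zero> \<odot>\<^bsub>M\<^esub> \<zero>\<^bsub>M\<^esub>)" using z by simp
  also have "\<dots> = \<zero> \<otimes> w \<zero>\<^bsub>M\<^esub>" using dual_memD(4)[OF assms R.zero_closed M.zero_closed] .
  also have "\<dots> = \<zero>" using c by simp
  finally show ?thesis .
qed

lemma dual_finsum: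
  assumes "w \<in> dual_mod R M" "finite K" "f \<in> K \<rightarrow> carrier M"
  shows "w (\<Oplus>\<^bsub>M\<^esub>k\<in>K. f k) = (\<Oplus>k\<in>K. w (f k))"
  using assms(2,3)
proof (induct K rule: finite_induct)
  case empty then show ?case using dual_zero[OF assms(1)] by simp
next
  case (insert k F)
  have cl: "\<And>j. j \<in> F \<Longrightarrow> w (f j) \<in> carrier R"
  proof -
    fix j assume "j \<in> F"
    then have "f j \<in> carrier M" using insert(4) by blast
    then show "w (f j) \<in> carrier R" using dual_memD(2)[OF assms(1)] by blast
  qed
  have "w (\<Oplus>\<^bsub>M\<^esub>k\<in>insert k F. f k) = w (f k \<oplus>\<^bsub>M\<^esub> (\<Oplus>\<^bsub>M\<^esub>k\<in>F. f k))"
    using insert by (simp add: M.finsum_insert)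
  also have "\<dots> = w (f k) \<oplus> w (\<Oplus>\<^bsub>M\<^esub>k\<in>F. f k)"
  proof (rule dual_memD(3)[OF assms(1)])
    show "f k \<in> carrier M" using insert(4) by blast
    show "(\<Oplus>\<^bsub>M\<^esub>k\<in>F. f k) \<in> carrier M" using insert(4) by (intro M.finsum_closed) blast
  qed
  also have "\<dots> = w (f k) \<oplus> (\<Oplus>k\<in>F. w (f k))"
    using insert(3,4) by simp
  also have "\<dots> = (\<Oplus>k\<in>insert k F. w (f k))"
    using insert(1,2) cl dual_memD(2)[OF assms(1)] insert(4) by (simp add: R.finsum_insert Pi_def)
  finally show ?case .
qed

lemma dual_restrict_finsum:
  assumes "finite K" "\<And>k. k \<in> K \<Longrightarrow> u k \<in> dual_mod R M"
  shows "restrict (\<lambda>x. \<Oplus>k\<in>K. u k x) (carrier M) \<in> dual_mod R M"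
proof -
  have cl: "\<And>x. x \<in> carrier M \<Longrightarrow> (\<lambda>k. u k x) \<in> K \<rightarrow> carrier R"
  proof (rule funcsetI)
    fix x k assume "x \<in> carrier M" "k \<in> K"
    then show "u k x \<in> carrier R" using assms(2)[of k] dual_memD(2)[of "u k" x] by simp
  qed
  show ?thesis unfolding dual_mod_def
  proof (intro CollectI conjI ballI)
    fix x y assume xy: "x \<in> carrier M" "y \<in> carrier M"
    have "(\<Oplus>k\<in>K. u k (x \<oplus>\<^bsub>M\<^esub> y)) = (\<Oplus>k\<in>K. u k x \<oplus> u k y)"
    proof (rule R.finsum_cong'[OF refl])
      show "(\<lambda>k. u k x \<oplus> u k y) \<in> K \<rightarrow> carrier R" using cl xy by (auto intro!: R.a_closed)
      show "\<And>k. k \<in> K \<Longrightarrow> u k (x \<oplus>\<^bsub>M\<^esub> y) = u k x \<oplus> u k y"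
        using dual_memD(3)[OF assms(2)] xy by blast
    qed
    also have "\<dots> = (\<Oplus>k\<in>K. u k x) \<oplus> (\<Oplus>k\<in>K. u k y)"
      using R.finsum_addf[OF cl[OF xy(1)] cl[OF xy(2)]] by simp
    finally show "restrict (\<lambda>x. \<Oplus>k\<in>K. u k x) (carrier M) (x \<oplus>\<^bsub>M\<^esub> y) =
       restrict (\<lambda>x. \<Oplus>k\<in>K. u k x) (carrier M) x \<oplus> restrict (\<lambda>x. \<Oplus>k\<in>K. u k x) (carrier M) y"
      using xy by simp
  next
    fix a x assume ax: "a \<in> carrier R" "x \<in> carrier M"
    have "(\<Oplus>k\<in>K. u k (a \<odot>\<^bsub>M\<^esub> x)) = (\<Oplus>k\<in>K. a \<otimes> u k x)"
    proof (rule R.finsum_cong'[OF refl])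
      show "(\<lambda>k. a \<otimes> u k x) \<in> K \<rightarrow> carrier R" using cl ax by (auto intro!: R.m_closed)
      show "\<And>k. k \<in> K \<Longrightarrow> u k (a \<odot>\<^bsub>M\<^esub> x) = a \<otimes> u k x"
        using dual_memD(4)[OF assms(2)] ax by blast
    qed
    also have "\<dots> = a \<otimes> (\<Oplus>k\<in>K. u k x)"
      using R.finsum_rdistr[OF assms(1) ax(1) cl[OF ax(2)]] by simp
    finally show "restrict (\<lambda>x. \<Oplus>k\<in>K. u k x) (carrier M) (a \<odot>\<^bsub>M\<^esub> x) =
       a \<otimes> restrict (\<lambda>x. \<Oplus>k\<in>K. u k x) (carrier M) x" using ax by simp
  next
    show "restrict (\<lambda>x. \<Oplus>k\<in>K. u k x) (carrier M) \<in> extensional (carrier M)" by simp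
    show "restrict (\<lambda>x. \<Oplus>k\<in>K. u k x) (carrier M) \<in> carrier M \<rightarrow> carrier R"
    proof (rule funcsetI)
      fix x assume "x \<in> carrier M"
      then show "restrict (\<lambda>x. \<Oplus>k\<in>K. u k x) (carrier M) x \<in> carrier R"
        using R.finsum_closed[OF cl] by simp
    qed
  qed
qed

lemma dual_scale:
  assumes "a \<in> carrier R" "w \<in> dual_mod R M"
  shows "restrict (\<lambda>x. a \<otimes> w x) (carrier M) \<in> dual_mod R M"
  unfolding dual_mod_def
proof (intro CollectI conjI ballI)
  note d = dual_memD[OF assms(2)]
  fix x y assume xy: "x \<in> carrier M" "y \<in> carrier M"
  then show "restrict (\<lambda>x. a \<otimes> w x) (carrier M) (x \<oplus>\<^bsub>M\<^esub> y) =
    restrict (\<lambda>x. a \<otimes> w x) (carrier M) x \<oplus> restrict (\<lambda>x. a \<otimes> w x) (carrier M) y"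
    using d(2,3) assms(1) by (simp add: R.r_distr)
next
  note d = dual_memD[OF assms(2)]
  fix b x assume bx: "b \<in> carrier R" "x \<in> carrier M"
  then show "restrict (\<lambda>x. a \<otimes> w x) (carrier M) (b \<odot>\<^bsub>M\<^esub> x) =
    b \<otimes> restrict (\<lambda>x. a \<otimes> w x) (carrier M) x"
    using d(2,4) assms(1) by (simp add: R.m_lcomm)
next
  show "restrict (\<lambda>x. a \<otimes> w x) (carrier M) \<in> extensional (carrier M)" by simp
next
  show "restrict (\<lambda>x. a \<otimes> w x) (carrier M) \<in> carrier M \<rightarrow> carrier R"
    using assms(1) dual_memD(2)[OF assms(2)] by simp
qed

lemma dual_add:
  assumes "w \<in> dual_mod R M" "w' \<in> dual_mod R M"
  shows "restrict (\<lambda>x. w x \<oplus> w' x) (carrier M) \<in> dual_mod R M"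
  unfolding dual_mod_def
proof (intro CollectI conjI ballI)
  note d = dual_memD[OF assms(1)] and d' = dual_memD[OF assms(2)]
  fix x y assume xy: "x \<in> carrier M" "y \<in> carrier M"
  have c: "w x \<in> carrier R" "w y \<in> carrier R" "w' x \<in> carrier R" "w' y \<in> carrier R"
    using d(2) d'(2) xy by auto
  have "w (x \<oplus>\<^bsub>M\<^esub> y) \<oplus> w' (x \<oplus>\<^bsub>M\<^esub> y) = (w x \<oplus> w y) \<oplus> (w' x \<oplus> w' y)"
    using d(3) d'(3) xy by simp
  also have "\<dots> = (w x \<oplus> w' x) \<oplus> (w y \<oplus> w' y)"
    using c by (metis R.a_assoc R.a_comm R.a_closed)
  finally show "restrict (\<lambda>x. w x \<oplus> w' x) (carrier M) (x \<oplus>\<^bsub>M\<^esub> y) =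
    restrict (\<lambda>x. w x \<oplus> w' x) (carrier M) x \<oplus> restrict (\<lambda>x. w x \<oplus> w' x) (carrier M) y"
    using xy by simp
next
  note d = dual_memD[OF assms(1)] and d' = dual_memD[OF assms(2)]
  fix b x assume bx: "b \<in> carrier R" "x \<in> carrier M"
  then show "restrict (\<lambda>x. w x \<oplus> w' x) (carrier M) (b \<odot>\<^bsub>M\<^esub> x) =
    b \<otimes> restrict (\<lambda>x. w x \<oplus> w' x) (carrier M) x"
    using d(2,4) d'(2,4) by (simp add: R.r_distr)
next
  show "restrict (\<lambda>x. w x \<oplus> w' x) (carrier M) \<in> extensional (carrier M)" by simp
next
  show "restrict (\<lambda>x. w x \<oplus> w' x) (carrier M) \<in> carrier M \<rightarrow> carrier R"
    using dual_memD(2)[OF assms(1)] dual_memD(2)[OF assms(2)] by simp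
qed

lemma dual_zero_mem: "restrict (\<lambda>x. \<zero>) (carrier M) \<in> dual_mod R M"
  unfolding dual_mod_def by auto

end

lemma (in abelian_group) finsum_neg:
  assumes "finite A" "f \<in> A \<rightarrow> carrier G"
  shows "(\<Oplus>i\<in>A. \<ominus> f i) = \<ominus> (\<Oplus>i\<in>A. f i)"
proof -
  have c1: "(\<lambda>i. \<ominus> f i) \<in> A \<rightarrow> carrier G" using assms(2) by auto
  have "(\<Oplus>i\<in>A. \<ominus> f i) \<oplus> (\<Oplus>i\<in>A. f i) = (\<Oplus>i\<in>A. \<ominus> f i \<oplus> f i)"
    using finsum_addf[OF c1 assms(2)] by simp
  also have "\<dots> = (\<Oplus>i\<in>A. \<zero>)"
  proof (rule finsum_cong'[OF refl])
    show "(\<lambda>i. \<zero>) \<in> A \<rightarrow> carrier G" by simp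
    fix i assume "i \<in> A"
    then have "f i \<in> carrier G" using assms(2) by blast
    then show "\<ominus> f i \<oplus> f i = \<zero>" by (rule l_neg)
  qed
  also have "\<dots> = \<zero>" by simp
  finally have "(\<Oplus>i\<in>A. \<ominus> f i) \<oplus> (\<Oplus>i\<in>A. f i) = \<zero>" .
  then show ?thesis
    by (metis assms(2) c1 finsum_closed minus_equality)
qed

locale tens = module R M + B: cring B
  for R :: "('r, 'c) ring_scheme" (structure) and M :: "('r, 'e, 'd) module_scheme"
  and B :: "('b, 'f) ring_scheme" +
  fixes phi :: "'r \<Rightarrow> 'b"
  assumes phi_hom: "phi \<in> ring_hom R B"
begin

abbreviation tm :: "('e \<Rightarrow> 'r) \<times> 'b \<Rightarrow> 'e \<Rightarrow> 'b" where
  "tm p x \<equiv> phi (fst p x) \<otimes>\<^bsub>B\<^esub> snd p"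

abbreviation TF where "TF \<equiv> tensor_free R M B"
abbreviation REL where "REL \<equiv> tensor_rel R M B phi"

lemma phi_closed: "a \<in> carrier R \<Longrightarrow> phi a \<in> carrier B"
  using phi_hom by (simp add: ring_hom_closed)

lemma phi_add: "a \<in> carrier R \<Longrightarrow> b \<in> carrier R \<Longrightarrow> phi (a \<oplus> b) = phi a \<oplus>\<^bsub>B\<^esub> phi b"
  using phi_hom by (simp add: ring_hom_add)

lemma phi_mult: "a \<in> carrier R \<Longrightarrow> b \<in> carrier R \<Longrightarrow> phi (a \<otimes> b) = phi a \<otimes>\<^bsub>B\<^esub> phi b"
  using phi_hom by (simp add: ring_hom_mult)

lemma phi_one: "phi \<one> = \<one>\<^bsub>B\<^esub>"
  using phi_hom by (simp add: ring_hom_one)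

lemma tm_closed: "p \<in> dual_mod R M \<times> carrier B \<Longrightarrow> x \<in> carrier M \<Longrightarrow> tm p x \<in> carrier B"
  using dual_memD(2)[of "fst p" x] phi_closed by auto

lemma tmp_closed: "p \<in> dual_mod R M \<times> carrier B \<Longrightarrow> x \<in> carrier M \<Longrightarrow> add_pow B (n::int) (tm p x) \<in> carrier B"
  by (rule B.add.int_pow_closed[OF tm_closed])

lemma tmp_Pi: "T \<subseteq> dual_mod R M \<times> carrier B \<Longrightarrow> x \<in> carrier M \<Longrightarrow> (\<lambda>p. add_pow B (e p::int) (tm p x)) \<in> T \<rightarrow> carrier B"
proof (rule funcsetI)
  fix p assume "T \<subseteq> dual_mod R M \<times> carrier B" "x \<in> carrier M" "p \<in> T"
  then show "add_pow B (e p) (tm p x) \<in> carrier B" using tmp_closed by blast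
qed

lemma add_pow_zero: "add_pow B (0::int) v = \<zero>\<^bsub>B\<^esub>" by (simp add: add_pow_def)

lemma TF_iff: "c \<in> TF \<longleftrightarrow> finite {p. c p \<noteq> 0} \<and> {p. c p \<noteq> 0} \<subseteq> dual_mod R M \<times> carrier B"
  unfolding tensor_free_def by simp

lemma cr_sum:
  assumes "c \<in> TF" "finite T" "{p. c p \<noteq> 0} \<subseteq> T" "T \<subseteq> dual_mod R M \<times> carrier B" "x \<in> carrier M"
  shows "canon_rep R M B phi c x = (\<Oplus>\<^bsub>B\<^esub>p\<in>T. add_pow B (c p) (tm p x))"
proof -
  have "canon_rep R M B phi c x = (\<Oplus>\<^bsub>B\<^esub>p\<in>{p. c p \<noteq> 0}. add_pow B (c p) (tm p x))"
    unfolding canon_rep_def using assms(5) by simp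
  also have "\<dots> = (\<Oplus>\<^bsub>B\<^esub>p\<in>T. add_pow B (c p) (tm p x))"
  proof (rule B.add.finprod_mono_neutral_cong_left[OF assms(2,3)])
    show "\<And>i. i \<in> T - {p. c p \<noteq> 0} \<Longrightarrow> add_pow B (c i) (tm i x) = \<zero>\<^bsub>B\<^esub>" by (simp add: add_pow_zero)
    show "(\<lambda>p. add_pow B (c p) (tm p x)) \<in> T \<rightarrow> carrier B"
      using assms(4,5) by (rule tmp_Pi)
  qed simp
  finally show ?thesis .
qed

lemma TF_plus: assumes "c \<in> TF" "d \<in> TF" shows "(\<lambda>q. c q + d q) \<in> TF"
proof -
  have "{p. c p + d p \<noteq> 0} \<subseteq> {p. c p \<noteq> 0} \<union> {p. d p \<noteq> 0}" by auto
  then show ?thesis using assms unfolding TF_iff by (meson finite_Un finite_subset le_sup_iff subset_trans)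
qed

lemma TF_neg: assumes "c \<in> TF" shows "(\<lambda>q. - c q) \<in> TF"
  using assms unfolding TF_iff by simp

lemma TF_diff: assumes "c \<in> TF" "d \<in> TF" shows "(\<lambda>q. c q - d q) \<in> TF"
  using TF_plus[OF assms(1) TF_neg[OF assms(2)]] by simp

lemma TF_zero: "(\<lambda>q. 0) \<in> TF" unfolding TF_iff by simp

lemma TF_delta: "p \<in> dual_mod R M \<times> carrier B \<Longrightarrow> delta p \<in> TF"
  unfolding TF_iff delta_def by auto

lemma cr_plus:
  assumes "c \<in> TF" "d \<in> TF" "x \<in> carrier M"
  shows "canon_rep R M B phi (\<lambda>q. c q + d q) x = canon_rep R M B phi c x \<oplus>\<^bsub>B\<^esub> canon_rep R M B phi d x"
proof -
  define T where "T = {p. c p \<noteq> 0} \<union> {p. d p \<noteq> 0}"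
  have T: "finite T" "T \<subseteq> dual_mod R M \<times> carrier B" using assms unfolding T_def TF_iff by auto
  have cl: "\<And>e. (\<lambda>p. add_pow B (e p :: int) (tm p x)) \<in> T \<rightarrow> carrier B"
    using T(2) assms(3) by (rule tmp_Pi)
  have "canon_rep R M B phi (\<lambda>q. c q + d q) x = (\<Oplus>\<^bsub>B\<^esub>p\<in>T. add_pow B (c p + d p) (tm p x))"
    by (rule cr_sum[OF TF_plus[OF assms(1,2)] T(1) _ T(2) assms(3)]) (auto simp: T_def)
  also have "\<dots> = (\<Oplus>\<^bsub>B\<^esub>p\<in>T. add_pow B (c p) (tm p x) \<oplus>\<^bsub>B\<^esub> add_pow B (d p) (tm p x))"
  proof (rule B.finsum_cong'[OF refl])
    show "(\<lambda>p. add_pow B (c p) (tm p x) \<oplus>\<^bsub>B\<^esub> add_pow B (d p) (tm p x)) \<in> T \<rightarrow> carrier B"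
      using cl[of c] cl[of d] by (auto intro!: B.a_closed)
    fix p assume "p \<in> T"
    then have "tm p x \<in> carrier B" using T(2) assms(3) tm_closed by blast
    then show "add_pow B (c p + d p) (tm p x) = add_pow B (c p) (tm p x) \<oplus>\<^bsub>B\<^esub> add_pow B (d p) (tm p x)"
      by (rule B.add.int_pow_mult)
  qed
  also have "\<dots> = (\<Oplus>\<^bsub>B\<^esub>p\<in>T. add_pow B (c p) (tm p x)) \<oplus>\<^bsub>B\<^esub> (\<Oplus>\<^bsub>B\<^esub>p\<in>T. add_pow B (d p) (tm p x))"
    using B.finsum_addf[OF cl[of c] cl[of d]] by simp
  also have "\<dots> = canon_rep R M B phi c x \<oplus>\<^bsub>B\<^esub> canon_rep R M B phi d x"
    using cr_sum[OF assms(1) T(1) _ T(2) assms(3)] cr_sum[OF assms(2) T(1) _ T(2) assms(3)]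
    by (simp add: T_def)
  finally show ?thesis .
qed

lemma cr_neg:
  assumes "c \<in> TF" "x \<in> carrier M"
  shows "canon_rep R M B phi (\<lambda>q. - c q) x = \<ominus>\<^bsub>B\<^esub> canon_rep R M B phi c x"
proof -
  define T where "T = {p. c p \<noteq> 0}"
  have T: "finite T" "T \<subseteq> dual_mod R M \<times> carrier B" using assms unfolding T_def TF_iff by auto
  have cl: "\<And>e. (\<lambda>p. add_pow B (e p :: int) (tm p x)) \<in> T \<rightarrow> carrier B"
    using T(2) assms(2) by (rule tmp_Pi)
  have "canon_rep R M B phi (\<lambda>q. - c q) x = (\<Oplus>\<^bsub>B\<^esub>p\<in>T. add_pow B (- c p) (tm p x))"
    by (rule cr_sum[OF TF_neg[OF assms(1)] T(1) _ T(2) assms(2)]) (auto simp: T_def)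
  also have "\<dots> = (\<Oplus>\<^bsub>B\<^esub>p\<in>T. \<ominus>\<^bsub>B\<^esub> add_pow B (c p) (tm p x))"
  proof (rule B.finsum_cong'[OF refl])
    show "(\<lambda>p. \<ominus>\<^bsub>B\<^esub> add_pow B (c p) (tm p x)) \<in> T \<rightarrow> carrier B"
      using cl[of c] by auto
    fix p assume "p \<in> T"
    then have "tm p x \<in> carrier B" using T(2) assms(2) tm_closed by blast
    then show "add_pow B (- c p) (tm p x) = \<ominus>\<^bsub>B\<^esub> add_pow B (c p) (tm p x)"
      by (rule B.add.int_pow_neg)
  qed
  also have "\<dots> = \<ominus>\<^bsub>B\<^esub> (\<Oplus>\<^bsub>B\<^esub>p\<in>T. add_pow B (c p) (tm p x))"
    using B.finsum_neg[OF T(1) cl[of c]] by simp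
  also have "\<dots> = \<ominus>\<^bsub>B\<^esub> canon_rep R M B phi c x"
    using cr_sum[OF assms(1) T(1) _ T(2) assms(2)] by (simp add: T_def)
  finally show ?thesis .
qed

lemma cr_diff:
  assumes "c \<in> TF" "d \<in> TF" "x \<in> carrier M"
  shows "canon_rep R M B phi (\<lambda>q. c q - d q) x = canon_rep R M B phi c x \<ominus>\<^bsub>B\<^esub> canon_rep R M B phi d x"
  using cr_plus[OF assms(1) TF_neg[OF assms(2)] assms(3)] cr_neg[OF assms(2,3)]
  by (simp add: a_minus_def)

lemma cr_delta:
  assumes "p \<in> dual_mod R M \<times> carrier B" "x \<in> carrier M"
  shows "canon_rep R M B phi (delta p) x = tm p x"
proof -
  have "{q. delta p q \<noteq> 0} = {p}" by (auto simp: delta_def)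
  then show ?thesis using assms tm_closed unfolding canon_rep_def by (simp add: delta_def)
qed

lemma cr_zero:
  assumes "x \<in> carrier M" shows "canon_rep R M B phi (\<lambda>q. 0) x = \<zero>\<^bsub>B\<^esub>"
  using assms unfolding canon_rep_def by simp

lemma gen_TF: "g \<in> tensor_gens R M B phi \<Longrightarrow> g \<in> TF"
  unfolding tensor_gens_def
  by (auto intro!: TF_diff TF_delta dual_add dual_scale B.a_closed B.m_closed phi_closed)

lemma REL_TF: "r \<in> REL \<Longrightarrow> r \<in> TF"
  by (induct rule: tensor_rel.induct) (auto intro: TF_zero gen_TF TF_diff)

lemma B_aux1: "u \<in> carrier B \<Longrightarrow> v \<in> carrier B \<Longrightarrow> (u \<oplus>\<^bsub>B\<^esub> v) \<ominus>\<^bsub>B\<^esub> u \<ominus>\<^bsub>B\<^esub> v = \<zero>\<^bsub>B\<^esub>"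
  by (metis B.add.m_comm B.minus_eq B.r_neg1 B.r_neg B.a_closed B.add.inv_closed B.a_assoc)

lemma gen_vanish:
  assumes "g \<in> tensor_gens R M B phi" "x \<in> carrier M"
  shows "canon_rep R M B phi g x = \<zero>\<^bsub>B\<^esub>"
  using assms(1) unfolding tensor_gens_def
proof (elim UnE CollectE exE conjE)
  fix w w' b assume g: "g = (\<lambda>q. delta (restrict (\<lambda>x. w x \<oplus> w' x) (carrier M), b) q - delta (w, b) q - delta (w', b) q)"
    and h: "w \<in> dual_mod R M" "w' \<in> dual_mod R M" "b \<in> carrier B"
  let ?a = "(restrict (\<lambda>x. w x \<oplus> w' x) (carrier M), b)"
  have m: "?a \<in> dual_mod R M \<times> carrier B" "(w,b) \<in> dual_mod R M \<times> carrier B" "(w',b) \<in> dual_mod R M \<times> carrier B"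
    using h dual_add by auto
  have "canon_rep R M B phi g x = tm ?a x \<ominus>\<^bsub>B\<^esub> tm (w,b) x \<ominus>\<^bsub>B\<^esub> tm (w',b) x"
    unfolding g using m assms(2)
    by (simp add: cr_diff TF_diff TF_delta cr_delta)
  also have "tm ?a x = tm (w,b) x \<oplus>\<^bsub>B\<^esub> tm (w',b) x"
    using assms(2) h dual_memD(2)[of w x] dual_memD(2)[of w' x]
    by (simp add: phi_add phi_closed B.l_distr)
  finally show ?thesis using B_aux1[OF tm_closed[OF m(2) assms(2)] tm_closed[OF m(3) assms(2)]] by simp
next
  fix w b b' assume g: "g = (\<lambda>q. delta (w, b \<oplus>\<^bsub>B\<^esub> b') q - delta (w, b) q - delta (w, b') q)"
    and h: "w \<in> dual_mod R M" "b \<in> carrier B" "b' \<in> carrier B"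
  have m: "(w, b \<oplus>\<^bsub>B\<^esub> b') \<in> dual_mod R M \<times> carrier B" "(w,b) \<in> dual_mod R M \<times> carrier B" "(w,b') \<in> dual_mod R M \<times> carrier B"
    using h by auto
  have "canon_rep R M B phi g x = tm (w, b \<oplus>\<^bsub>B\<^esub> b') x \<ominus>\<^bsub>B\<^esub> tm (w,b) x \<ominus>\<^bsub>B\<^esub> tm (w,b') x"
    unfolding g using m assms(2)
    by (simp add: cr_diff TF_diff TF_delta cr_delta)
  also have "tm (w, b \<oplus>\<^bsub>B\<^esub> b') x = tm (w,b) x \<oplus>\<^bsub>B\<^esub> tm (w,b') x"
    using assms(2) h dual_memD(2)[of w x]
    by (simp add: phi_closed B.r_distr)
  finally show ?thesis using B_aux1[OF tm_closed[OF m(2) assms(2)] tm_closed[OF m(3) assms(2)]] by simp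
next
  fix a w b assume g: "g = (\<lambda>q. delta (restrict (\<lambda>x. a \<otimes> w x) (carrier M), b) q - delta (w, phi a \<otimes>\<^bsub>B\<^esub> b) q)"
    and h: "a \<in> carrier R" "w \<in> dual_mod R M" "b \<in> carrier B"
  let ?a = "(restrict (\<lambda>x. a \<otimes> w x) (carrier M), b)"
  have m: "?a \<in> dual_mod R M \<times> carrier B" "(w, phi a \<otimes>\<^bsub>B\<^esub> b) \<in> dual_mod R M \<times> carrier B"
    using h dual_scale phi_closed by auto
  have "canon_rep R M B phi g x = tm ?a x \<ominus>\<^bsub>B\<^esub> tm (w, phi a \<otimes>\<^bsub>B\<^esub> b) x"
    unfolding g using m assms(2)
    by (simp add: cr_diff TF_diff TF_delta cr_delta)
  also have "tm ?a x = tm (w, phi a \<otimes>\<^bsub>B\<^esub> b) x"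
    using assms(2) h dual_memD(2)[of w x]
    by (simp add: phi_mult phi_closed B.m_ac)
  finally show ?thesis using B.r_neg[OF tm_closed[OF m(2) assms(2)]] by (simp add: B.minus_eq)
qed

lemma REL_vanish: "r \<in> REL \<Longrightarrow> x \<in> carrier M \<Longrightarrow> canon_rep R M B phi r x = \<zero>\<^bsub>B\<^esub>"
proof (induct rule: tensor_rel.induct)
  case zero then show ?case by (simp add: cr_zero)
next
  case (gen g) then show ?case by (simp add: gen_vanish)
next
  case (diff u v) then show ?case using B.r_neg[OF B.zero_closed] by (simp add: cr_diff REL_TF B.minus_eq)
qed

lemma cr_WD:
  assumes "c \<in> TF" "d \<in> TF" "(\<lambda>q. c q - d q) \<in> REL"
  shows "canon_rep R M B phi c = canon_rep R M B phi d"
proof (rule extensionalityI[of _ "carrier M"])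
  show "canon_rep R M B phi c \<in> extensional (carrier M)" "canon_rep R M B phi d \<in> extensional (carrier M)"
    unfolding canon_rep_def by simp_all
  fix x assume x: "x \<in> carrier M"
  have c: "canon_rep R M B phi c x \<in> carrier B" "canon_rep R M B phi d x \<in> carrier B"
    using x unfolding canon_rep_def
    by (auto intro!: B.finsum_closed B.add.int_pow_closed B.m_closed phi_closed dual_memD(2)
        dest!: subsetD[OF conjunct2[OF assms(1)[unfolded TF_iff]]] subsetD[OF conjunct2[OF assms(2)[unfolded TF_iff]]])
  have "canon_rep R M B phi c x \<ominus>\<^bsub>B\<^esub> canon_rep R M B phi d x = \<zero>\<^bsub>B\<^esub>"
    using REL_vanish[OF assms(3) x] cr_diff[OF assms(1,2) x] by simp
  then show "canon_rep R M B phi c x = canon_rep R M B phi d x"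
    using c by (metis B.add.inv_closed B.minus_eq B.minus_minus B.minus_equality)
qed

end

context tens begin

definition ER where "ER = {(c, c'). c \<in> TF \<and> c' \<in> TF \<and> (\<lambda>q. c q - c' q) \<in> REL}"

lemma td_eq: "tensor_dual R M B phi = TF // ER"
  unfolding tensor_dual_def ER_def by simp

lemma REL_neg: "r \<in> REL \<Longrightarrow> (\<lambda>q. - r q) \<in> REL"
  using tensor_rel.diff[OF tensor_rel.zero, of r] by simp

lemma REL_plus: assumes "r \<in> REL" "s \<in> REL" shows "(\<lambda>q. r q + s q) \<in> REL"
proof -
  have "(\<lambda>q. r q - (\<lambda>q. - s q) q) \<in> REL" by (rule tensor_rel.diff[OF assms(1) REL_neg[OF assms(2)]])
  then show ?thesis by simp
qed

lemma REL_sum: "finite K \<Longrightarrow> (\<And>k. k \<in> K \<Longrightarrow> f k \<in> REL) \<Longrightarrow> (\<lambda>q. \<Sum>k\<in>K. f k q) \<in> REL"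
proof (induct K rule: finite_induct)
  case empty then show ?case using tensor_rel.zero by simp
next
  case (insert k F)
  then show ?case using REL_plus[of "f k" "\<lambda>q. \<Sum>k\<in>F. f k q"] by simp
qed

lemma REL_eqI: "r \<in> REL \<Longrightarrow> (\<And>q. s q = r q) \<Longrightarrow> s \<in> REL"
proof -
  assume "r \<in> REL" "\<And>q. s q = r q"
  then have "s = r" by auto
  then show "s \<in> REL" using \<open>r \<in> REL\<close> by simp
qed

lemma equiv_ER: "equiv TF ER"
proof (rule equivI)
  show "ER \<subseteq> TF \<times> TF" unfolding ER_def by auto
  show "refl_on TF ER" unfolding refl_on_def ER_def using tensor_rel.zero by auto
  show "sym ER" unfolding sym_def ER_def
  proof (clarify)
    fix a b assume "a \<in> TF" "b \<in> TF" "(\<lambda>q. a q - b q) \<in> REL"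
    then show "(\<lambda>q. b q - a q) \<in> REL" using REL_neg[of "\<lambda>q. a q - b q"] by simp
  qed
  show "trans ER" unfolding trans_def ER_def
  proof (clarify)
    fix a b c assume "a \<in> TF" "b \<in> TF" "c \<in> TF" "(\<lambda>q. a q - b q) \<in> REL" "(\<lambda>q. b q - c q) \<in> REL"
    then show "(\<lambda>q. a q - c q) \<in> REL" using REL_plus[of "\<lambda>q. a q - b q" "\<lambda>q. b q - c q"] by simp
  qed
qed

lemma canon_map_class:
  assumes "c \<in> TF"
  shows "canon_map R M B phi (ER `` {c}) = canon_rep R M B phi c"
proof -
  have "canon_rep R M B phi ` (ER `` {c}) = {canon_rep R M B phi c}"
  proof
    show "canon_rep R M B phi ` (ER `` {c}) \<subseteq> {canon_rep R M B phi c}"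
    proof
      fix y assume "y \<in> canon_rep R M B phi ` (ER `` {c})"
      then obtain d where d: "(c, d) \<in> ER" "y = canon_rep R M B phi d" by auto
      then show "y \<in> {canon_rep R M B phi c}" unfolding ER_def using cr_WD by auto
    qed
    show "{canon_rep R M B phi c} \<subseteq> canon_rep R M B phi ` (ER `` {c})"
      using assms equiv_class_self[OF equiv_ER assms] by blast
  qed
  then show ?thesis unfolding canon_map_def by simp
qed

lemma class_eq_iff:
  assumes "c \<in> TF" "d \<in> TF"
  shows "ER `` {c} = ER `` {d} \<longleftrightarrow> (\<lambda>q. c q - d q) \<in> REL"
proof -
  have "ER `` {c} = ER `` {d} \<longleftrightarrow> (c, d) \<in> ER" by (rule eq_equiv_class_iff[OF equiv_ER assms])
  also have "\<dots> \<longleftrightarrow> (\<lambda>q. c q - d q) \<in> REL" using assms unfolding ER_def by simp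
  finally show ?thesis .
qed

lemma cr_hom:
  assumes "c \<in> TF"
  shows "canon_rep R M B phi c \<in> hom_to_alg R M B phi"
proof -
  define S where "S = {p. c p \<noteq> 0}"
  have S: "finite S" "S \<subseteq> dual_mod R M \<times> carrier B" using assms unfolding S_def TF_iff by auto
  have cl: "\<And>x. x \<in> carrier M \<Longrightarrow> (\<lambda>p. add_pow B (c p) (tm p x)) \<in> S \<rightarrow> carrier B"
    using S(2) tm_closed by (auto intro!: B.add.int_pow_closed)
  have e: "\<And>x. x \<in> carrier M \<Longrightarrow> canon_rep R M B phi c x = (\<Oplus>\<^bsub>B\<^esub>p\<in>S. add_pow B (c p) (tm p x))"
    unfolding canon_rep_def S_def by simp
  show ?thesis unfolding hom_to_alg_def
  proof (intro CollectI conjI ballI)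
    show "canon_rep R M B phi c \<in> extensional (carrier M)" unfolding canon_rep_def by simp
    show "canon_rep R M B phi c \<in> carrier M \<rightarrow> carrier B"
      using e cl by (auto intro!: B.finsum_closed)
  next
    fix x y assume xy: "x \<in> carrier M" "y \<in> carrier M"
    have "(\<Oplus>\<^bsub>B\<^esub>p\<in>S. add_pow B (c p) (tm p (x \<oplus>\<^bsub>M\<^esub> y))) =
          (\<Oplus>\<^bsub>B\<^esub>p\<in>S. add_pow B (c p) (tm p x) \<oplus>\<^bsub>B\<^esub> add_pow B (c p) (tm p y))"
    proof (rule B.finsum_cong'[OF refl])
      show "(\<lambda>p. add_pow B (c p) (tm p x) \<oplus>\<^bsub>B\<^esub> add_pow B (c p) (tm p y)) \<in> S \<rightarrow> carrier B"
        using cl xy by (auto intro!: B.a_closed)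
      fix p assume p: "p \<in> S"
      have "tm p (x \<oplus>\<^bsub>M\<^esub> y) = tm p x \<oplus>\<^bsub>B\<^esub> tm p y"
        using p S(2) xy dual_memD(2,3)[of "fst p"] by (auto simp: phi_add phi_closed B.l_distr)
      then show "add_pow B (c p) (tm p (x \<oplus>\<^bsub>M\<^esub> y)) = add_pow B (c p) (tm p x) \<oplus>\<^bsub>B\<^esub> add_pow B (c p) (tm p y)"
        using p S(2) xy tm_closed by (auto simp: B.add.int_pow_distrib)
    qed
    also have "\<dots> = (\<Oplus>\<^bsub>B\<^esub>p\<in>S. add_pow B (c p) (tm p x)) \<oplus>\<^bsub>B\<^esub> (\<Oplus>\<^bsub>B\<^esub>p\<in>S. add_pow B (c p) (tm p y))"
      using B.finsum_addf[OF cl cl] xy by simp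
    finally show "canon_rep R M B phi c (x \<oplus>\<^bsub>M\<^esub> y) = canon_rep R M B phi c x \<oplus>\<^bsub>B\<^esub> canon_rep R M B phi c y"
      using e xy by simp
  next
    fix a x assume ax: "a \<in> carrier R" "x \<in> carrier M"
    have "(\<Oplus>\<^bsub>B\<^esub>p\<in>S. add_pow B (c p) (tm p (a \<odot>\<^bsub>M\<^esub> x))) =
          (\<Oplus>\<^bsub>B\<^esub>p\<in>S. phi a \<otimes>\<^bsub>B\<^esub> add_pow B (c p) (tm p x))"
    proof (rule B.finsum_cong'[OF refl])
      show "(\<lambda>p. phi a \<otimes>\<^bsub>B\<^esub> add_pow B (c p) (tm p x)) \<in> S \<rightarrow> carrier B"
        using cl ax phi_closed by (auto intro!: B.m_closed)
      fix p assume p: "p \<in> S"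
      have "tm p (a \<odot>\<^bsub>M\<^esub> x) = phi a \<otimes>\<^bsub>B\<^esub> tm p x"
        using p S(2) ax dual_memD(2,4)[of "fst p"] by (auto simp: phi_mult phi_closed B.m_assoc)
      then show "add_pow B (c p) (tm p (a \<odot>\<^bsub>M\<^esub> x)) = phi a \<otimes>\<^bsub>B\<^esub> add_pow B (c p) (tm p x)"
        using p S(2) ax tm_closed phi_closed by (auto simp: B.add_pow_rdistr_int)
    qed
    also have "\<dots> = phi a \<otimes>\<^bsub>B\<^esub> (\<Oplus>\<^bsub>B\<^esub>p\<in>S. add_pow B (c p) (tm p x))"
      using B.finsum_rdistr[OF S(1) phi_closed[OF ax(1)] cl[OF ax(2)]] by simp
    finally show "canon_rep R M B phi c (a \<odot>\<^bsub>M\<^esub> x) = phi a \<otimes>\<^bsub>B\<^esub> canon_rep R M B phi c x"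
      using e ax by simp
  qed
qed

end

definition DB :: "('r, 'c) ring_scheme \<Rightarrow> ('r, 'e, 'd) module_scheme \<Rightarrow> 'k set \<Rightarrow> ('k \<Rightarrow> 'e \<Rightarrow> 'r) \<Rightarrow> ('k \<Rightarrow> 'e) \<Rightarrow> bool" where
  "DB R M K w e \<longleftrightarrow> finite K \<and> (\<forall>k\<in>K. w k \<in> dual_mod R M \<and> e k \<in> carrier M)
     \<and> (\<forall>x\<in>carrier M. x = (\<Oplus>\<^bsub>M\<^esub>k\<in>K. w k x \<odot>\<^bsub>M\<^esub> e k))"

context tens begin

lemma hom_memD:
  assumes "f \<in> hom_to_alg R M B phi"
  shows "f \<in> extensional (carrier M)" "\<And>x. x \<in> carrier M \<Longrightarrow> f x \<in> carrier B"
    "\<And>x y. x \<in> carrier M \<Longrightarrow> y \<in> carrier M \<Longrightarrow> f (x \<oplus>\<^bsub>M\<^esub> y) = f x \<oplus>\<^bsub>B\<^esub> f y"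
    "\<And>a x. a \<in> carrier R \<Longrightarrow> x \<in> carrier M \<Longrightarrow> f (a \<odot>\<^bsub>M\<^esub> x) = phi a \<otimes>\<^bsub>B\<^esub> f x"
  using assms unfolding hom_to_alg_def by auto

lemma hom_zero:
  assumes "f \<in> hom_to_alg R M B phi" shows "f \<zero>\<^bsub>M\<^esub> = \<zero>\<^bsub>B\<^esub>"
proof -
  have z: "\<zero> \<odot>\<^bsub>M\<^esub> \<zero>\<^bsub>M\<^esub> = \<zero>\<^bsub>M\<^esub>" by simp
  have c: "f \<zero>\<^bsub>M\<^esub> \<in> carrier B" using hom_memD(2)[OF assms M.zero_closed] .
  have "f \<zero>\<^bsub>M\<^esub> = f (\<zero> \<odot>\<^bsub>M\<^esub> \<zero>\<^bsub>M\<^esub>)" using z by simp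
  also have "\<dots> = phi \<zero> \<otimes>\<^bsub>B\<^esub> f \<zero>\<^bsub>M\<^esub>" using hom_memD(4)[OF assms R.zero_closed M.zero_closed] .
  also have "phi \<zero> = \<zero>\<^bsub>B\<^esub>" using phi_hom by (simp add: ring_hom_zero[OF _ R.ring_axioms B.ring_axioms])
  also have "\<zero>\<^bsub>B\<^esub> \<otimes>\<^bsub>B\<^esub> f \<zero>\<^bsub>M\<^esub> = \<zero>\<^bsub>B\<^esub>" using c by simp
  finally show ?thesis .
qed

lemma hom_finsum:
  assumes "f \<in> hom_to_alg R M B phi" "finite K" "g \<in> K \<rightarrow> carrier M"
  shows "f (\<Oplus>\<^bsub>M\<^esub>k\<in>K. g k) = (\<Oplus>\<^bsub>B\<^esub>k\<in>K. f (g k))"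
  using assms(2,3)
proof (induct K rule: finite_induct)
  case empty then show ?case using hom_zero[OF assms(1)] by simp
next
  case (insert k F)
  have cl: "(\<lambda>j. f (g j)) \<in> F \<rightarrow> carrier B"
  proof (rule funcsetI)
    fix j assume "j \<in> F"
    then have "g j \<in> carrier M" using insert(4) by blast
    then show "f (g j) \<in> carrier B" using hom_memD(2)[OF assms(1)] by blast
  qed
  have gk: "g k \<in> carrier M" using insert(4) by blast
  have "f (\<Oplus>\<^bsub>M\<^esub>k\<in>insert k F. g k) = f (g k \<oplus>\<^bsub>M\<^esub> (\<Oplus>\<^bsub>M\<^esub>k\<in>F. g k))"
    using insert by (simp add: M.finsum_insert)
  also have "\<dots> = f (g k) \<oplus>\<^bsub>B\<^esub> f (\<Oplus>\<^bsub>M\<^esub>k\<in>F. g k)"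
  proof (rule hom_memD(3)[OF assms(1) gk])
    show "(\<Oplus>\<^bsub>M\<^esub>k\<in>F. g k) \<in> carrier M" using insert(4) by (intro M.finsum_closed) blast
  qed
  also have "\<dots> = f (g k) \<oplus>\<^bsub>B\<^esub> (\<Oplus>\<^bsub>B\<^esub>k\<in>F. f (g k))"
    using insert(3,4) by simp
  also have "\<dots> = (\<Oplus>\<^bsub>B\<^esub>k\<in>insert k F. f (g k))"
    using insert(1,2) cl hom_memD(2)[OF assms(1) gk] by (simp add: B.finsum_insert)
  finally show ?case .
qed

lemma TF_sum: "finite K \<Longrightarrow> (\<And>k. k \<in> K \<Longrightarrow> h k \<in> TF) \<Longrightarrow> (\<lambda>q. \<Sum>k\<in>K. h k q) \<in> TF"
proof (induct K rule: finite_induct)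
  case empty then show ?case using TF_zero by simp
next
  case (insert k F)
  then show ?case using TF_plus[of "h k" "\<lambda>q. \<Sum>k\<in>F. h k q"] by simp
qed

lemma cr_sumK:
  assumes "finite K" "\<And>k. k \<in> K \<Longrightarrow> p k \<in> dual_mod R M \<times> carrier B" "x \<in> carrier M"
  shows "canon_rep R M B phi (\<lambda>q. \<Sum>k\<in>K. delta (p k) q) x = (\<Oplus>\<^bsub>B\<^esub>k\<in>K. tm (p k) x)"
  using assms(1,2)
proof (induct K rule: finite_induct)
  case empty then show ?case using cr_zero[OF assms(3)] by simp
next
  case (insert k F)
  have TFF: "(\<lambda>q. \<Sum>k\<in>F. delta (p k) q) \<in> TF" using insert TF_sum[of F "\<lambda>k. delta (p k)"] TF_delta by auto
  have pk: "p k \<in> dual_mod R M \<times> carrier B" using insert by simp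
  have cl: "(\<lambda>k. tm (p k) x) \<in> F \<rightarrow> carrier B" using insert(4) tm_closed assms(3) by auto
  have "canon_rep R M B phi (\<lambda>q. \<Sum>k\<in>insert k F. delta (p k) q) x
      = canon_rep R M B phi (\<lambda>q. delta (p k) q + (\<lambda>q. \<Sum>k\<in>F. delta (p k) q) q) x"
    using insert(1,2) by simp
  also have "\<dots> = tm (p k) x \<oplus>\<^bsub>B\<^esub> canon_rep R M B phi (\<lambda>q. \<Sum>k\<in>F. delta (p k) q) x"
    using cr_plus[OF TF_delta[OF pk] TFF assms(3)] cr_delta[OF pk assms(3)] by simp
  also have "\<dots> = tm (p k) x \<oplus>\<^bsub>B\<^esub> (\<Oplus>\<^bsub>B\<^esub>k\<in>F. tm (p k) x)" using insert by simp
  also have "\<dots> = (\<Oplus>\<^bsub>B\<^esub>k\<in>insert k F. tm (p k) x)"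
    using insert(1,2) cl tm_closed[OF pk assms(3)] by (simp add: B.finsum_insert)
  finally show ?case .
qed

end

locale tensDB = tens +
  fixes K and w and e
  assumes db: "DB R M K w e"
begin

lemma K_fin: "finite K" using db unfolding DB_def by simp
lemma w_dual: "k \<in> K \<Longrightarrow> w k \<in> dual_mod R M" using db unfolding DB_def by simp
lemma e_M: "k \<in> K \<Longrightarrow> e k \<in> carrier M" using db unfolding DB_def by simp
lemma expand: "x \<in> carrier M \<Longrightarrow> x = (\<Oplus>\<^bsub>M\<^esub>k\<in>K. w k x \<odot>\<^bsub>M\<^esub> e k)" using db unfolding DB_def by simp

definition N where
  "N f = (\<lambda>q. \<Sum>k\<in>K. delta (w k, f (e k)) q)"

lemma N_TF: "(\<And>k. k \<in> K \<Longrightarrow> f (e k) \<in> carrier B) \<Longrightarrow> N f \<in> TF"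
  unfolding N_def by (rule TF_sum[OF K_fin]) (auto intro: TF_delta w_dual)

lemma N_cong: "(\<And>k. k \<in> K \<Longrightarrow> f (e k) = g (e k)) \<Longrightarrow> N f = N g"
  unfolding N_def by (auto intro!: sum.cong)

lemma cr_N:
  assumes "f \<in> hom_to_alg R M B phi" "x \<in> carrier M"
  shows "canon_rep R M B phi (N f) x = f x"
proof -
  have p: "\<And>k. k \<in> K \<Longrightarrow> (w k, f (e k)) \<in> dual_mod R M \<times> carrier B"
    using w_dual e_M hom_memD(2)[OF assms(1)] by auto
  have wx: "\<And>k. k \<in> K \<Longrightarrow> w k x \<in> carrier R" using w_dual dual_memD(2) assms(2) by blast
  have "canon_rep R M B phi (N f) x = (\<Oplus>\<^bsub>B\<^esub>k\<in>K. tm (w k, f (e k)) x)"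
    unfolding N_def by (rule cr_sumK[OF K_fin p assms(2)])
  also have "\<dots> = (\<Oplus>\<^bsub>B\<^esub>k\<in>K. f (w k x \<odot>\<^bsub>M\<^esub> e k))"
  proof (rule B.finsum_cong'[OF refl])
    show "(\<lambda>k. f (w k x \<odot>\<^bsub>M\<^esub> e k)) \<in> K \<rightarrow> carrier B"
      using wx e_M hom_memD(2)[OF assms(1)] by auto
    fix k assume k: "k \<in> K"
    show "tm (w k, f (e k)) x = f (w k x \<odot>\<^bsub>M\<^esub> e k)"
      using hom_memD(4)[OF assms(1) wx[OF k] e_M[OF k]] by simp
  qed
  also have "\<dots> = f (\<Oplus>\<^bsub>M\<^esub>k\<in>K. w k x \<odot>\<^bsub>M\<^esub> e k)"
    by (rule hom_finsum[OF assms(1) K_fin, symmetric]) (use wx e_M in auto)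
  also have "\<dots> = f x" using expand[OF assms(2)] by simp
  finally show ?thesis .
qed

lemma gen2: "u \<in> dual_mod R M \<Longrightarrow> b \<in> carrier B \<Longrightarrow> b' \<in> carrier B \<Longrightarrow>
   (\<lambda>q. delta (u, b \<oplus>\<^bsub>B\<^esub> b') q - delta (u, b) q - delta (u, b') q) \<in> REL"
  by (rule tensor_rel.gen) (unfold tensor_gens_def, blast)

lemma delta_zero_REL:
  assumes "u \<in> dual_mod R M" shows "delta (u, \<zero>\<^bsub>B\<^esub>) \<in> REL"
proof -
  have "(\<lambda>q. delta (u, \<zero>\<^bsub>B\<^esub> \<oplus>\<^bsub>B\<^esub> \<zero>\<^bsub>B\<^esub>) q - delta (u, \<zero>\<^bsub>B\<^esub>) q - delta (u, \<zero>\<^bsub>B\<^esub>) q) \<in> REL"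
    using gen2[OF assms B.zero_closed B.zero_closed] .
  then have "(\<lambda>q. - delta (u, \<zero>\<^bsub>B\<^esub>) q) \<in> REL" by simp
  from REL_neg[OF this] show ?thesis by simp
qed

lemma delta_neg_REL:
  assumes "u \<in> dual_mod R M" "b \<in> carrier B"
  shows "(\<lambda>q. delta (u, \<ominus>\<^bsub>B\<^esub> b) q + delta (u, b) q) \<in> REL"
proof -
  have "(\<lambda>q. delta (u, b \<oplus>\<^bsub>B\<^esub> \<ominus>\<^bsub>B\<^esub> b) q - delta (u, b) q - delta (u, \<ominus>\<^bsub>B\<^esub> b) q) \<in> REL"
    using gen2[OF assms(1,2) B.a_inv_closed[OF assms(2)]] .
  then have 1: "(\<lambda>q. delta (u, \<zero>\<^bsub>B\<^esub>) q - delta (u, b) q - delta (u, \<ominus>\<^bsub>B\<^esub> b) q) \<in> REL"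
    using B.r_neg[OF assms(2)] by simp
  have "(\<lambda>q. delta (u, \<zero>\<^bsub>B\<^esub>) q - (\<lambda>q. delta (u, \<zero>\<^bsub>B\<^esub>) q - delta (u, b) q - delta (u, \<ominus>\<^bsub>B\<^esub> b) q) q) \<in> REL"
    by (rule tensor_rel.diff[OF delta_zero_REL[OF assms(1)] 1])
  then show ?thesis by (simp add: add.commute)
qed

lemma N_add:
  assumes "\<And>k. k \<in> K \<Longrightarrow> f (e k) \<in> carrier B" "\<And>k. k \<in> K \<Longrightarrow> g (e k) \<in> carrier B"
  shows "(\<lambda>q. N (\<lambda>x. f x \<oplus>\<^bsub>B\<^esub> g x) q - N f q - N g q) \<in> REL"
proof -
  have "(\<lambda>q. \<Sum>k\<in>K. (\<lambda>q. delta (w k, f (e k) \<oplus>\<^bsub>B\<^esub> g (e k)) q - delta (w k, f (e k)) q - delta (w k, g (e k)) q) q) \<in> REL"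
    by (rule REL_sum[OF K_fin]) (rule gen2[OF w_dual assms(1) assms(2)])
  then show ?thesis unfolding N_def by (simp add: sum_subtractf)
qed

lemma N_neg:
  assumes "\<And>k. k \<in> K \<Longrightarrow> g (e k) \<in> carrier B"
  shows "(\<lambda>q. N (\<lambda>x. \<ominus>\<^bsub>B\<^esub> g x) q + N g q) \<in> REL"
proof -
  have "(\<lambda>q. \<Sum>k\<in>K. (\<lambda>q. delta (w k, \<ominus>\<^bsub>B\<^esub> g (e k)) q + delta (w k, g (e k)) q) q) \<in> REL"
    by (rule REL_sum[OF K_fin]) (rule delta_neg_REL[OF w_dual assms(1)])
  then show ?thesis unfolding N_def by (simp add: sum.distrib)
qed

end

context tens begin

lemma gen1: "u \<in> dual_mod R M \<Longrightarrow> u' \<in> dual_mod R M \<Longrightarrow> b \<in> carrier B \<Longrightarrow>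
   (\<lambda>q. delta (restrict (\<lambda>x. u x \<oplus> u' x) (carrier M), b) q - delta (u, b) q - delta (u', b) q) \<in> REL"
  by (rule tensor_rel.gen) (unfold tensor_gens_def, blast)

lemma gen3: "a \<in> carrier R \<Longrightarrow> u \<in> dual_mod R M \<Longrightarrow> b \<in> carrier B \<Longrightarrow>
   (\<lambda>q. delta (restrict (\<lambda>x. a \<otimes> u x) (carrier M), b) q - delta (u, phi a \<otimes>\<^bsub>B\<^esub> b) q) \<in> REL"
  by (rule tensor_rel.gen) (unfold tensor_gens_def, blast)

lemma delta_zero_fun_REL:
  assumes "b \<in> carrier B"
  shows "delta (restrict (\<lambda>x. \<zero>) (carrier M), b) \<in> REL"
proof -
  let ?z = "restrict (\<lambda>x. \<zero>) (carrier M)"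
  have zz: "restrict (\<lambda>x. ?z x \<oplus> ?z x) (carrier M) = ?z"
    by (rule restrict_ext) simp
  have "(\<lambda>q. delta (restrict (\<lambda>x. ?z x \<oplus> ?z x) (carrier M), b) q - delta (?z, b) q - delta (?z, b) q) \<in> REL"
    by (rule gen1[OF dual_zero_mem dual_zero_mem assms])
  then have "(\<lambda>q. - delta (?z, b) q) \<in> REL" unfolding zz by simp
  from REL_neg[OF this] show ?thesis by (simp only: group_add_class.minus_minus)
qed

lemma Lsum:
  assumes "finite F" "\<And>k. k \<in> F \<Longrightarrow> u k \<in> dual_mod R M" "b \<in> carrier B"
  shows "(\<lambda>q. delta (restrict (\<lambda>x. \<Oplus>k\<in>F. u k x) (carrier M), b) q - (\<Sum>k\<in>F. delta (u k, b) q)) \<in> REL"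
  using assms(1,2)
proof (induct F rule: finite_induct)
  case empty
  have e: "restrict (\<lambda>x. \<Oplus>k\<in>{}. u k x) (carrier M) = restrict (\<lambda>x. \<zero>) (carrier M)"
    by (rule restrict_ext) simp
  show ?case unfolding e
    by (rule REL_eqI[OF delta_zero_fun_REL[OF assms(3)]]) (simp only: sum.empty diff_0_right)
next
  case (insert k F)
  let ?U = "restrict (\<lambda>x. \<Oplus>k\<in>F. u k x) (carrier M)"
  have uk: "u k \<in> dual_mod R M" using insert by simp
  have U: "?U \<in> dual_mod R M" using dual_restrict_finsum[OF insert(1)] insert(4) by simp
  have eq: "restrict (\<lambda>x. \<Oplus>k\<in>insert k F. u k x) (carrier M) = restrict (\<lambda>x. u k x \<oplus> ?U x) (carrier M)"
  proof (rule restrict_ext)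
    fix x assume x: "x \<in> carrier M"
    have cl: "(\<lambda>k. u k x) \<in> F \<rightarrow> carrier R" using insert(4) dual_memD(2) x by auto
    have "u k x \<in> carrier R" using dual_memD(2)[OF uk x] .
    then show "(\<Oplus>k\<in>insert k F. u k x) = u k x \<oplus> ?U x"
      using insert(1,2) cl x by (simp add: R.finsum_insert)
  qed
  have A: "(\<lambda>q. delta (restrict (\<lambda>x. u k x \<oplus> ?U x) (carrier M), b) q - delta (u k, b) q - delta (?U, b) q) \<in> REL"
    by (rule gen1[OF uk U assms(3)])
  have Bq: "(\<lambda>q. delta (?U, b) q - (\<Sum>k\<in>F. delta (u k, b) q)) \<in> REL"
    by (rule insert(3)) (use insert(4) in auto)
  from A have A': "(\<lambda>q. delta (restrict (\<lambda>x. \<Oplus>k\<in>insert k F. u k x) (carrier M), b) q - delta (u k, b) q - delta (?U, b) q) \<in> REL"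
    by (simp only: eq)
  show ?case
    by (rule REL_eqI[OF REL_plus[OF A' Bq]]) (subst sum.insert[OF insert(1,2)], simp add: algebra_simps)
qed

end

context tensDB begin

lemma core:
  assumes "w0 \<in> dual_mod R M" "b \<in> carrier B"
  shows "(\<lambda>q. delta (w0, b) q - N (tm (w0, b)) q) \<in> REL"
proof -
  define u where "u k = restrict (\<lambda>x. w0 (e k) \<otimes> w k x) (carrier M)" for k
  have we: "\<And>k. k \<in> K \<Longrightarrow> w0 (e k) \<in> carrier R" using dual_memD(2)[OF assms(1)] e_M by blast
  have u_dual: "\<And>k. k \<in> K \<Longrightarrow> u k \<in> dual_mod R M" unfolding u_def using dual_scale we w_dual by blast
  have w0eq: "w0 = restrict (\<lambda>x. \<Oplus>k\<in>K. u k x) (carrier M)"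
  proof (rule extensionalityI[of _ "carrier M"])
    show "w0 \<in> extensional (carrier M)" using dual_memD(1)[OF assms(1)] .
    show "restrict (\<lambda>x. \<Oplus>k\<in>K. u k x) (carrier M) \<in> extensional (carrier M)" by simp
    fix x assume x: "x \<in> carrier M"
    have wx: "\<And>k. k \<in> K \<Longrightarrow> w k x \<in> carrier R" using w_dual dual_memD(2) x by blast
    have "w0 x = w0 (\<Oplus>\<^bsub>M\<^esub>k\<in>K. w k x \<odot>\<^bsub>M\<^esub> e k)" using expand[OF x] by simp
    also have "\<dots> = (\<Oplus>k\<in>K. w0 (w k x \<odot>\<^bsub>M\<^esub> e k))"
      by (rule dual_finsum[OF assms(1) K_fin]) (use wx e_M in auto)
    also have "\<dots> = (\<Oplus>k\<in>K. u k x)"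
    proof (rule R.finsum_cong'[OF refl])
      show "(\<lambda>k. u k x) \<in> K \<rightarrow> carrier R" using u_dual dual_memD(2) x by blast
      fix k assume k: "k \<in> K"
      have "w0 (w k x \<odot>\<^bsub>M\<^esub> e k) = w k x \<otimes> w0 (e k)" using dual_memD(4)[OF assms(1) wx[OF k] e_M[OF k]] .
      also have "\<dots> = w0 (e k) \<otimes> w k x" using wx[OF k] we[OF k] by (simp add: R.m_comm)
      finally show "w0 (w k x \<odot>\<^bsub>M\<^esub> e k) = u k x" unfolding u_def using x by simp
    qed
    finally show "w0 x = restrict (\<lambda>x. \<Oplus>k\<in>K. u k x) (carrier M) x" using x by simp
  qed
  have A: "(\<lambda>q. delta (w0, b) q - (\<Sum>k\<in>K. delta (u k, b) q)) \<in> REL"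
    using Lsum[where F=K and u=u and b=b, OF K_fin u_dual assms(2)] unfolding w0eq[symmetric] .
  have Bq: "(\<lambda>q. \<Sum>k\<in>K. (\<lambda>q. delta (u k, b) q - delta (w k, phi (w0 (e k)) \<otimes>\<^bsub>B\<^esub> b) q) q) \<in> REL"
    by (rule REL_sum[OF K_fin]) (unfold u_def, rule gen3[OF we w_dual assms(2)])
  show ?thesis
    by (rule REL_eqI[OF REL_plus[OF A Bq]]) (simp add: N_def sum_subtractf)
qed

end

context tens begin

definition mu :: "(('e \<Rightarrow> 'r) \<times> 'b \<Rightarrow> int) \<Rightarrow> nat" where
  "mu c = (\<Sum>q\<in>{q. c q \<noteq> 0}. nat \<bar>c q\<bar>)"

lemma mu_sup: "finite S \<Longrightarrow> {q. c q \<noteq> 0} \<subseteq> S \<Longrightarrow> mu c = (\<Sum>q\<in>S. nat \<bar>c q\<bar>)"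
  unfolding mu_def by (rule sum.mono_neutral_left) auto

lemma mu_step:
  assumes "finite S" "{q. c q \<noteq> 0} \<subseteq> S" "p \<in> S" "c p \<noteq> 0"
    "\<And>q. q \<noteq> p \<Longrightarrow> c' q = c q" "nat \<bar>c' p\<bar> < nat \<bar>c p\<bar>"
  shows "mu c' < mu c"
proof -
  have sub': "{q. c' q \<noteq> 0} \<subseteq> S"
  proof
    fix q assume "q \<in> {q. c' q \<noteq> 0}"
    then show "q \<in> S" using assms(2,3) assms(5)[of q] by (cases "q = p") auto
  qed
  have "mu c' = nat \<bar>c' p\<bar> + (\<Sum>q\<in>S - {p}. nat \<bar>c' q\<bar>)"
    using mu_sup[OF assms(1) sub'] sum.remove[OF assms(1,3), of "\<lambda>q. nat \<bar>c' q\<bar>"] by simp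
  also have "(\<Sum>q\<in>S - {p}. nat \<bar>c' q\<bar>) = (\<Sum>q\<in>S - {p}. nat \<bar>c q\<bar>)"
    by (rule sum.cong) (use assms(5) in auto)
  also have "nat \<bar>c' p\<bar> + (\<Sum>q\<in>S - {p}. nat \<bar>c q\<bar>) < nat \<bar>c p\<bar> + (\<Sum>q\<in>S - {p}. nat \<bar>c q\<bar>)"
    using assms(6) by simp
  also have "\<dots> = mu c"
    using mu_sup[OF assms(1,2)] sum.remove[OF assms(1,3), of "\<lambda>q. nat \<bar>c q\<bar>"] by simp
  finally show ?thesis .
qed

lemma TF_induct:
  assumes "c \<in> TF" "P (\<lambda>q. 0)"
   "\<And>c p. c \<in> TF \<Longrightarrow> p \<in> dual_mod R M \<times> carrier B \<Longrightarrow> P c \<Longrightarrow> P (\<lambda>q. c q + delta p q)"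
   "\<And>c p. c \<in> TF \<Longrightarrow> p \<in> dual_mod R M \<times> carrier B \<Longrightarrow> P c \<Longrightarrow> P (\<lambda>q. c q - delta p q)"
  shows "P c"
proof -
  have "\<forall>c. c \<in> TF \<longrightarrow> mu c = n \<longrightarrow> P c" for n
  proof (induct n rule: less_induct)
    case (less n)
    show ?case
    proof (intro allI impI)
      fix c assume c: "c \<in> TF" "mu c = n"
      let ?S = "{q. c q \<noteq> 0}"
      have S: "finite ?S" "?S \<subseteq> dual_mod R M \<times> carrier B" using c(1) unfolding TF_iff by auto
      show "P c"
      proof (cases "?S = {}")
        case True
        then have "c = (\<lambda>q. 0)" by auto
        then show ?thesis using assms(2) by simp
      next
        case False
        then obtain p where p: "p \<in> ?S" by blast
        have pm: "p \<in> dual_mod R M \<times> carrier B" using p S(2) by blast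
        show ?thesis
        proof (cases "c p > 0")
          case True
          define c' where "c' = (\<lambda>q. c q - delta p q)"
          have c'TF: "c' \<in> TF" unfolding c'_def by (rule TF_diff[OF c(1) TF_delta[OF pm]])
          have "mu c' < mu c"
            by (rule mu_step[OF S(1) subset_refl p]) (use p True in \<open>auto simp: c'_def delta_def\<close>)
          then have "P c'" using less c'TF c(2) by blast
          from assms(3)[OF c'TF pm this] have "P (\<lambda>q. c' q + delta p q)" .
          moreover have "(\<lambda>q. c' q + delta p q) = c" unfolding c'_def by simp
          ultimately show ?thesis by simp
        next
          case False
          then have neg: "c p < 0" using p by auto
          define c' where "c' = (\<lambda>q. c q + delta p q)"
          have c'TF: "c' \<in> TF" unfolding c'_def by (rule TF_plus[OF c(1) TF_delta[OF pm]])
          have "mu c' < mu c"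
            by (rule mu_step[OF S(1) subset_refl p]) (use p neg in \<open>auto simp: c'_def delta_def\<close>)
          then have "P c'" using less c'TF c(2) by blast
          from assms(4)[OF c'TF pm this] have "P (\<lambda>q. c' q - delta p q)" .
          moreover have "(\<lambda>q. c' q - delta p q) = c" unfolding c'_def by simp
          ultimately show ?thesis by simp
        qed
      qed
    qed
  qed
  then show ?thesis using assms(1) by blast
qed

lemma cr_closed: "c \<in> TF \<Longrightarrow> x \<in> carrier M \<Longrightarrow> canon_rep R M B phi c x \<in> carrier B"
  using cr_hom hom_memD(2) by blast

end

context tensDB begin

lemma N_zero_REL: "N (\<lambda>x. \<zero>\<^bsub>B\<^esub>) \<in> REL"
proof -
  have "(\<lambda>q. \<Sum>k\<in>K. delta (w k, \<zero>\<^bsub>B\<^esub>) q) \<in> REL"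
    by (rule REL_sum[OF K_fin]) (rule delta_zero_REL[OF w_dual])
  then show ?thesis unfolding N_def .
qed

lemma inv_core:
  assumes "c \<in> TF"
  shows "(\<lambda>q. c q - N (canon_rep R M B phi c) q) \<in> REL"
proof (rule TF_induct[OF assms, where P="\<lambda>c. (\<lambda>q. c q - N (canon_rep R M B phi c) q) \<in> REL"])
  have "N (canon_rep R M B phi (\<lambda>q. 0)) = N (\<lambda>x. \<zero>\<^bsub>B\<^esub>)"
    by (rule N_cong) (simp add: cr_zero e_M)
  then show "(\<lambda>q. 0 - N (canon_rep R M B phi (\<lambda>q. 0)) q) \<in> REL" using REL_neg[OF N_zero_REL] by simp
next
  fix c p assume 3: "c \<in> TF" "p \<in> dual_mod R M \<times> carrier B" "(\<lambda>q. c q - N (canon_rep R M B phi c) q) \<in> REL"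
  obtain w0 b where p: "p = (w0, b)" by (cases p)
  have wb: "w0 \<in> dual_mod R M" "b \<in> carrier B" using 3(2) p by auto
  let ?f = "canon_rep R M B phi c" and ?g = "tm p"
  have fe: "\<And>k. k \<in> K \<Longrightarrow> ?f (e k) \<in> carrier B" using cr_closed[OF 3(1)] e_M by blast
  have ge: "\<And>k. k \<in> K \<Longrightarrow> ?g (e k) \<in> carrier B" using tm_closed[OF 3(2)] e_M by blast
  have Neq: "N (canon_rep R M B phi (\<lambda>q. c q + delta p q)) = N (\<lambda>x. ?f x \<oplus>\<^bsub>B\<^esub> ?g x)"
    by (rule N_cong) (simp add: cr_plus[OF 3(1) TF_delta[OF 3(2)] e_M] cr_delta[OF 3(2) e_M])
  have H2: "(\<lambda>q. delta p q - N ?g q) \<in> REL" using core[OF wb] p by simp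
  have H3: "(\<lambda>q. N (\<lambda>x. ?f x \<oplus>\<^bsub>B\<^esub> ?g x) q - N ?f q - N ?g q) \<in> REL" by (rule N_add[where f="?f" and g="?g", OF fe ge])
  show "(\<lambda>q. (\<lambda>q. c q + delta p q) q - N (canon_rep R M B phi (\<lambda>q. c q + delta p q)) q) \<in> REL" unfolding Neq
    by (rule REL_eqI[OF tensor_rel.diff[OF REL_plus[OF 3(3) H2] H3]]) simp
next
  fix c p assume 4: "c \<in> TF" "p \<in> dual_mod R M \<times> carrier B" "(\<lambda>q. c q - N (canon_rep R M B phi c) q) \<in> REL"
  obtain w0 b where p: "p = (w0, b)" by (cases p)
  have wb: "w0 \<in> dual_mod R M" "b \<in> carrier B" using 4(2) p by auto
  let ?f = "canon_rep R M B phi c" and ?g = "tm p"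
  let ?h = "\<lambda>x. \<ominus>\<^bsub>B\<^esub> ?g x"
  have fe: "\<And>k. k \<in> K \<Longrightarrow> ?f (e k) \<in> carrier B" using cr_closed[OF 4(1)] e_M by blast
  have ge: "\<And>k. k \<in> K \<Longrightarrow> ?g (e k) \<in> carrier B" using tm_closed[OF 4(2)] e_M by blast
  have he: "\<And>k. k \<in> K \<Longrightarrow> ?h (e k) \<in> carrier B" using ge by blast
  have Neq: "N (canon_rep R M B phi (\<lambda>q. c q - delta p q)) = N (\<lambda>x. ?f x \<oplus>\<^bsub>B\<^esub> ?h x)"
    by (rule N_cong) (simp add: cr_diff[OF 4(1) TF_delta[OF 4(2)] e_M] cr_delta[OF 4(2) e_M] B.minus_eq)
  have H2: "(\<lambda>q. delta p q - N ?g q) \<in> REL" using core[OF wb] p by simp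
  have H3: "(\<lambda>q. N (\<lambda>x. ?f x \<oplus>\<^bsub>B\<^esub> ?h x) q - N ?f q - N ?h q) \<in> REL" by (rule N_add[where f="?f" and g="?h", OF fe he])
  have H4: "(\<lambda>q. N ?h q + N ?g q) \<in> REL" by (rule N_neg[where g="?g", OF ge])
  show "(\<lambda>q. (\<lambda>q. c q - delta p q) q - N (canon_rep R M B phi (\<lambda>q. c q - delta p q)) q) \<in> REL" unfolding Neq
    by (rule REL_eqI[OF tensor_rel.diff[OF tensor_rel.diff[OF tensor_rel.diff[OF 4(3) H2] H3] H4]]) simp
qed

lemma iso: "canon_iso R M B phi"
  unfolding canon_iso_def td_eq bij_betw_def
proof
  show "inj_on (canon_map R M B phi) (TF // ER)"
  proof (rule inj_onI)
    fix X Y assume X: "X \<in> TF // ER" and Y: "Y \<in> TF // ER" and eq: "canon_map R M B phi X = canon_map R M B phi Y"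
    obtain c where c: "X = ER `` {c}" "c \<in> TF" using X by (rule quotientE)
    obtain d where d: "Y = ER `` {d}" "d \<in> TF" using Y by (rule quotientE)
    have crq: "canon_rep R M B phi c = canon_rep R M B phi d"
      using eq canon_map_class[OF c(2)] canon_map_class[OF d(2)] c(1) d(1) by simp
    have "(\<lambda>q. (\<lambda>q. c q - N (canon_rep R M B phi c) q) q - (\<lambda>q. d q - N (canon_rep R M B phi d) q) q) \<in> REL"
      by (rule tensor_rel.diff[OF inv_core[OF c(2)] inv_core[OF d(2)]])
    then have "(\<lambda>q. c q - d q) \<in> REL" unfolding crq by simp
    then show "X = Y" using class_eq_iff[OF c(2) d(2)] c(1) d(1) by simp
  qed
  show "canon_map R M B phi ` (TF // ER) = hom_to_alg R M B phi"
  proof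
    show "canon_map R M B phi ` (TF // ER) \<subseteq> hom_to_alg R M B phi"
    proof
      fix y assume "y \<in> canon_map R M B phi ` (TF // ER)"
      then obtain X where X: "X \<in> TF // ER" "y = canon_map R M B phi X" by blast
      obtain c where c: "X = ER `` {c}" "c \<in> TF" using X(1) by (rule quotientE)
      show "y \<in> hom_to_alg R M B phi" using X(2) c canon_map_class cr_hom by simp
    qed
    show "hom_to_alg R M B phi \<subseteq> canon_map R M B phi ` (TF // ER)"
    proof
      fix f assume f: "f \<in> hom_to_alg R M B phi"
      have NT: "N f \<in> TF" by (rule N_TF) (use hom_memD(2)[OF f] e_M in blast)
      have "canon_rep R M B phi (N f) = f"
      proof (rule extensionalityI[of _ "carrier M"])
        show "canon_rep R M B phi (N f) \<in> extensional (carrier M)" unfolding canon_rep_def by simp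
        show "f \<in> extensional (carrier M)" using hom_memD(1)[OF f] .
        fix x assume "x \<in> carrier M"
        then show "canon_rep R M B phi (N f) x = f x" by (rule cr_N[OF f])
      qed
      then have "canon_map R M B phi (ER `` {N f}) = f" using canon_map_class[OF NT] by simp
      moreover have "ER `` {N f} \<in> TF // ER" using NT by (rule quotientI)
      ultimately show "f \<in> canon_map R M B phi ` (TF // ER)" by force
    qed
  qed
qed

end

context module begin

lemma finsum_smult_rdistr:
  assumes "finite A" "f \<in> A \<rightarrow> carrier R" "x \<in> carrier M"
  shows "(\<Oplus>i\<in>A. f i) \<odot>\<^bsub>M\<^esub> x = (\<Oplus>\<^bsub>M\<^esub>i\<in>A. f i \<odot>\<^bsub>M\<^esub> x)"
  using assms(1,2)
proof (induct A rule: finite_induct)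
  case empty then show ?case using assms(3) by simp
next
  case (insert a F)
  have fa: "f a \<in> carrier R" using insert(4) by blast
  have fF: "f \<in> F \<rightarrow> carrier R" using insert(4) by blast
  have "(\<Oplus>i\<in>insert a F. f i) \<odot>\<^bsub>M\<^esub> x = (f a \<oplus> (\<Oplus>i\<in>F. f i)) \<odot>\<^bsub>M\<^esub> x"
    using insert(1,2) fa fF by (simp add: R.finsum_insert)
  also have "\<dots> = f a \<odot>\<^bsub>M\<^esub> x \<oplus>\<^bsub>M\<^esub> (\<Oplus>i\<in>F. f i) \<odot>\<^bsub>M\<^esub> x"
    using smult_l_distr[OF fa R.finsum_closed[OF fF] assms(3)] .
  also have "\<dots> = f a \<odot>\<^bsub>M\<^esub> x \<oplus>\<^bsub>M\<^esub> (\<Oplus>\<^bsub>M\<^esub>i\<in>F. f i \<odot>\<^bsub>M\<^esub> x)" using insert(3) fF by simp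
  also have "\<dots> = (\<Oplus>\<^bsub>M\<^esub>i\<in>insert a F. f i \<odot>\<^bsub>M\<^esub> x)"
    using insert(1,2) fa fF assms(3) by (simp add: M.finsum_insert Pi_def)
  finally show ?case .
qed

lemma DB_merge:
  assumes "DB R M K w e"
  shows "\<exists>J W. DB R M J W id \<and> J \<subseteq> carrier M"
proof -
  have K: "finite K" and wd: "\<And>k. k \<in> K \<Longrightarrow> w k \<in> dual_mod R M" and eM: "\<And>k. k \<in> K \<Longrightarrow> e k \<in> carrier M"
    and ex: "\<And>x. x \<in> carrier M \<Longrightarrow> x = (\<Oplus>\<^bsub>M\<^esub>k\<in>K. w k x \<odot>\<^bsub>M\<^esub> e k)"
    using assms unfolding DB_def by auto
  define J where "J = e ` K"
  define fib where "fib j = {k \<in> K. e k = j}" for j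
  define W where "W j = restrict (\<lambda>x. \<Oplus>k\<in>fib j. w k x) (carrier M)" for j
  have fibfin: "\<And>j. finite (fib j)" unfolding fib_def using K by simp
  have Wd: "\<And>j. W j \<in> dual_mod R M"
    unfolding W_def by (rule dual_restrict_finsum[OF fibfin]) (auto simp: fib_def wd)
  have JM: "J \<subseteq> carrier M" unfolding J_def using eM by auto
  have "DB R M J W id" unfolding DB_def
  proof (intro conjI ballI)
    show "finite J" unfolding J_def using K by simp
    fix j assume "j \<in> J" then show "W j \<in> dual_mod R M" "id j \<in> carrier M" using Wd JM by auto
  next
    fix x assume x: "x \<in> carrier M"
    have wx: "\<And>k. k \<in> K \<Longrightarrow> w k x \<in> carrier R" using wd dual_memD(2) x by blast
    have "(\<Oplus>\<^bsub>M\<^esub>j\<in>J. W j x \<odot>\<^bsub>M\<^esub> id j) = (\<Oplus>\<^bsub>M\<^esub>j\<in>J. (\<Oplus>\<^bsub>M\<^esub>k\<in>fib j. w k x \<odot>\<^bsub>M\<^esub> e k))"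
    proof (rule M.finsum_cong'[OF refl])
      show "(\<lambda>j. \<Oplus>\<^bsub>M\<^esub>k\<in>fib j. w k x \<odot>\<^bsub>M\<^esub> e k) \<in> J \<rightarrow> carrier M"
        using wx eM by (auto intro!: M.finsum_closed simp: fib_def)
      fix j assume j: "j \<in> J"
      have "W j x \<odot>\<^bsub>M\<^esub> id j = (\<Oplus>k\<in>fib j. w k x) \<odot>\<^bsub>M\<^esub> j" unfolding W_def using x by simp
      also have "\<dots> = (\<Oplus>\<^bsub>M\<^esub>k\<in>fib j. w k x \<odot>\<^bsub>M\<^esub> j)"
        by (rule finsum_smult_rdistr[OF fibfin]) (use wx JM j in \<open>auto simp: fib_def\<close>)
      also have "\<dots> = (\<Oplus>\<^bsub>M\<^esub>k\<in>fib j. w k x \<odot>\<^bsub>M\<^esub> e k)"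
        by (rule M.finsum_cong'[OF refl]) (use wx eM in \<open>auto simp: fib_def\<close>)
      finally show "W j x \<odot>\<^bsub>M\<^esub> id j = (\<Oplus>\<^bsub>M\<^esub>k\<in>fib j. w k x \<odot>\<^bsub>M\<^esub> e k)" .
    qed
    also have "\<dots> = (\<Oplus>\<^bsub>M\<^esub>k\<in>(\<Union>j\<in>J. fib j). w k x \<odot>\<^bsub>M\<^esub> e k)"
    proof (rule M.add.finprod_UN_disjoint[symmetric])
      show "finite J" unfolding J_def using K by simp
      show "\<And>j. j \<in> J \<Longrightarrow> finite (fib j)" using fibfin by simp
      show "pairwise (\<lambda>i j. disjnt (fib i) (fib j)) J" unfolding pairwise_def disjnt_def fib_def by auto
      show "\<And>i k. i \<in> J \<Longrightarrow> k \<in> fib i \<Longrightarrow> w k x \<odot>\<^bsub>M\<^esub> e k \<in> carrier M"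
        using wx eM by (auto simp: fib_def)
    qed
    also have "(\<Union>j\<in>J. fib j) = K" unfolding J_def fib_def by auto
    finally show "x = (\<Oplus>\<^bsub>M\<^esub>j\<in>J. W j x \<odot>\<^bsub>M\<^esub> id j)" using ex[OF x] by simp
  qed
  then show ?thesis using JM by blast
qed

end

context module begin

lemma DB_fin_proj:
  assumes db: "DB R M J W id" and JM: "J \<subseteq> carrier M"
  shows "fin_type R M \<and> projective_mod R M"
proof -
  have J: "finite J" and Wd: "\<And>j. j \<in> J \<Longrightarrow> W j \<in> dual_mod R M"
    and ex: "\<And>x. x \<in> carrier M \<Longrightarrow> x = (\<Oplus>\<^bsub>M\<^esub>j\<in>J. W j x \<odot>\<^bsub>M\<^esub> j)"
    using db unfolding DB_def by auto
  have Wx: "\<And>j x. j \<in> J \<Longrightarrow> x \<in> carrier M \<Longrightarrow> W j x \<in> carrier R" using Wd dual_memD(2) by blast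
  have ft: "fin_type R M" unfolding fin_type_def
  proof (intro exI conjI ballI)
    show "finite J" "J \<subseteq> carrier M" by (fact J, fact JM)
    fix x assume x: "x \<in> carrier M"
    show "(\<lambda>j. W j x) \<in> J \<rightarrow> carrier R" using Wx x by blast
    show "x = (\<Oplus>\<^bsub>M\<^esub>j\<in>J. W j x \<odot>\<^bsub>M\<^esub> j)" by (rule ex[OF x])
  qed
  define s where "s x = restrict (\<lambda>j. W j x) J" for x
  define p where "p g = (\<Oplus>\<^bsub>M\<^esub>j\<in>J. g j \<odot>\<^bsub>M\<^esub> j)" for g
  have fm: "\<And>g. g \<in> free_mod R J \<Longrightarrow> g \<in> J \<rightarrow> carrier R" unfolding free_mod_def by simp
  have pcl: "\<And>g. g \<in> J \<rightarrow> carrier R \<Longrightarrow> p g \<in> carrier M"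
    unfolding p_def using JM by (auto intro!: M.finsum_closed)
  have "projective_mod R M" unfolding projective_mod_def
  proof (intro exI conjI ballI)
    show "s \<in> carrier M \<rightarrow> free_mod R J"
      unfolding s_def free_mod_def using Wx J by auto
    show "p \<in> free_mod R J \<rightarrow> carrier M" using fm pcl by blast
  next
    fix x y assume xy: "x \<in> carrier M" "y \<in> carrier M"
    show "s (x \<oplus>\<^bsub>M\<^esub> y) = restrict (\<lambda>i. s x i \<oplus> s y i) J"
      unfolding s_def by (rule restrict_ext) (use xy Wd dual_memD(3) in auto)
  next
    fix a x assume ax: "a \<in> carrier R" "x \<in> carrier M"
    show "s (a \<odot>\<^bsub>M\<^esub> x) = restrict (\<lambda>i. a \<otimes> s x i) J"
      unfolding s_def by (rule restrict_ext) (use ax Wd dual_memD(4) in auto)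
  next
    fix g h assume gh: "g \<in> free_mod R J" "h \<in> free_mod R J"
    have g: "g \<in> J \<rightarrow> carrier R" and h: "h \<in> J \<rightarrow> carrier R" using gh fm by auto
    have "p (restrict (\<lambda>i. g i \<oplus> h i) J) = (\<Oplus>\<^bsub>M\<^esub>j\<in>J. g j \<odot>\<^bsub>M\<^esub> j \<oplus>\<^bsub>M\<^esub> h j \<odot>\<^bsub>M\<^esub> j)"
      unfolding p_def
    proof (rule M.finsum_cong'[OF refl])
      show "(\<lambda>j. g j \<odot>\<^bsub>M\<^esub> j \<oplus>\<^bsub>M\<^esub> h j \<odot>\<^bsub>M\<^esub> j) \<in> J \<rightarrow> carrier M"
        using g h JM by (auto intro!: M.a_closed)
      fix j assume j: "j \<in> J"
      then show "restrict (\<lambda>i. g i \<oplus> h i) J j \<odot>\<^bsub>M\<^esub> j = g j \<odot>\<^bsub>M\<^esub> j \<oplus>\<^bsub>M\<^esub> h j \<odot>\<^bsub>M\<^esub> j"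
        using smult_l_distr[of "g j" "h j" j] g h JM by auto
    qed
    also have "\<dots> = p g \<oplus>\<^bsub>M\<^esub> p h"
      unfolding p_def by (rule M.finsum_addf) (use g h JM in auto)
    finally show "p (restrict (\<lambda>i. g i \<oplus> h i) J) = p g \<oplus>\<^bsub>M\<^esub> p h" .
  next
    fix a g assume ag: "a \<in> carrier R" "g \<in> free_mod R J"
    have g: "g \<in> J \<rightarrow> carrier R" using ag fm by auto
    have "p (restrict (\<lambda>i. a \<otimes> g i) J) = (\<Oplus>\<^bsub>M\<^esub>j\<in>J. a \<odot>\<^bsub>M\<^esub> (g j \<odot>\<^bsub>M\<^esub> j))"
      unfolding p_def
    proof (rule M.finsum_cong'[OF refl])
      show "(\<lambda>j. a \<odot>\<^bsub>M\<^esub> (g j \<odot>\<^bsub>M\<^esub> j)) \<in> J \<rightarrow> carrier M"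
        using g JM ag by auto
      fix j assume j: "j \<in> J"
      then show "restrict (\<lambda>i. a \<otimes> g i) J j \<odot>\<^bsub>M\<^esub> j = a \<odot>\<^bsub>M\<^esub> (g j \<odot>\<^bsub>M\<^esub> j)"
        using smult_assoc1[of a "g j" j] g JM ag by auto
    qed
    also have "\<dots> = a \<odot>\<^bsub>M\<^esub> p g"
      unfolding p_def by (rule finsum_smult_ldistr[symmetric]) (use g JM ag J in auto)
    finally show "p (restrict (\<lambda>i. a \<otimes> g i) J) = a \<odot>\<^bsub>M\<^esub> p g" .
  next
    fix x assume x: "x \<in> carrier M"
    have "p (s x) = (\<Oplus>\<^bsub>M\<^esub>j\<in>J. W j x \<odot>\<^bsub>M\<^esub> j)"
      unfolding p_def s_def by (rule M.finsum_cong'[OF refl]) (use Wx x JM in auto)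
    then show "p (s x) = x" using ex[OF x] by simp
  qed
  with ft show ?thesis by simp
qed

end

locale projset = module R M for R :: "('r, 'c) ring_scheme" (structure) and M :: "('r, 'e, 'd) module_scheme" +
  fixes I :: "'e set" and s p
  assumes s_in: "s \<in> carrier M \<rightarrow> free_mod R I" and p_in: "p \<in> free_mod R I \<rightarrow> carrier M"
    and s_add: "\<And>x y. x \<in> carrier M \<Longrightarrow> y \<in> carrier M \<Longrightarrow> s (x \<oplus>\<^bsub>M\<^esub> y) = restrict (\<lambda>i. s x i \<oplus> s y i) I"
    and s_smult: "\<And>a x. a \<in> carrier R \<Longrightarrow> x \<in> carrier M \<Longrightarrow> s (a \<odot>\<^bsub>M\<^esub> x) = restrict (\<lambda>i. a \<otimes> s x i) I"
    and p_add: "\<And>g h. g \<in> free_mod R I \<Longrightarrow> h \<in> free_mod R I \<Longrightarrow> p (restrict (\<lambda>i. g i \<oplus> h i) I) = p g \<oplus>\<^bsub>M\<^esub> p h"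
    and p_smult: "\<And>a g. a \<in> carrier R \<Longrightarrow> g \<in> free_mod R I \<Longrightarrow> p (restrict (\<lambda>i. a \<otimes> g i) I) = a \<odot>\<^bsub>M\<^esub> p g"
    and ps: "\<And>x. x \<in> carrier M \<Longrightarrow> p (s x) = x"
begin

lemma sx: "x \<in> carrier M \<Longrightarrow> s x \<in> free_mod R I" using s_in by blast
lemma sxi: "x \<in> carrier M \<Longrightarrow> i \<in> I \<Longrightarrow> s x i \<in> carrier R" using sx unfolding free_mod_def by blast
lemma sx_ext: "x \<in> carrier M \<Longrightarrow> s x \<in> extensional I" using sx unfolding free_mod_def by blast

lemma fm_memI:
  assumes "g \<in> I \<rightarrow> carrier R" "finite S" "\<And>i. i \<in> I \<Longrightarrow> i \<notin> S \<Longrightarrow> g i = \<zero>"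
  shows "restrict g I \<in> free_mod R I"
proof -
  have sub: "{i \<in> I. restrict g I i \<noteq> \<zero>} \<subseteq> S" using assms(3) by auto
  show ?thesis unfolding free_mod_def
  proof (intro CollectI conjI)
    show "restrict g I \<in> extensional I" by simp
    show "restrict g I \<in> I \<rightarrow> carrier R" using assms(1) by auto
    show "finite {i \<in> I. restrict g I i \<noteq> \<zero>}" by (rule finite_subset[OF sub assms(2)])
  qed
qed

lemma fm_zero: "restrict (\<lambda>i. \<zero>) I \<in> free_mod R I"
  by (rule fm_memI[where S="{}"]) auto

lemma s_zero: "s \<zero>\<^bsub>M\<^esub> = restrict (\<lambda>i. \<zero>) I"
proof -
  have "s \<zero>\<^bsub>M\<^esub> = s (\<zero> \<odot>\<^bsub>M\<^esub> \<zero>\<^bsub>M\<^esub>)" by simp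
  also have "\<dots> = restrict (\<lambda>i. \<zero> \<otimes> s \<zero>\<^bsub>M\<^esub> i) I" by (rule s_smult) simp_all
  also have "\<dots> = restrict (\<lambda>i. \<zero>) I" by (rule restrict_ext) (simp add: sxi)
  finally show ?thesis .
qed

lemma p_zero: "p (restrict (\<lambda>i. \<zero>) I) = \<zero>\<^bsub>M\<^esub>"
proof -
  define z where "z = restrict (\<lambda>i. \<zero>) I"
  have zf: "z \<in> free_mod R I" unfolding z_def by (rule fm_zero)
  have pz: "p z \<in> carrier M" using p_in zf by blast
  have eqz: "restrict (\<lambda>i. \<zero> \<otimes> z i) I = z" unfolding z_def by (rule restrict_ext) simp
  have "p (restrict (\<lambda>i. \<zero> \<otimes> z i) I) = \<zero> \<odot>\<^bsub>M\<^esub> p z" by (rule p_smult[OF R.zero_closed zf])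
  then have "p z = \<zero> \<odot>\<^bsub>M\<^esub> p z" unfolding eqz .
  then show ?thesis using pz unfolding z_def by simp
qed

lemma s_finsum:
  assumes "finite F" "f \<in> F \<rightarrow> carrier M"
  shows "s (\<Oplus>\<^bsub>M\<^esub>a\<in>F. f a) = restrict (\<lambda>i. \<Oplus>a\<in>F. s (f a) i) I"
  using assms
proof (induct F rule: finite_induct)
  case empty then show ?case using s_zero by simp
next
  case (insert a F)
  have fa: "f a \<in> carrier M" and fF: "f \<in> F \<rightarrow> carrier M" using insert(4) by auto
  have "s (\<Oplus>\<^bsub>M\<^esub>a\<in>insert a F. f a) = s (f a \<oplus>\<^bsub>M\<^esub> (\<Oplus>\<^bsub>M\<^esub>a\<in>F. f a))"
    using insert(1,2) fa fF by (simp add: M.finsum_insert)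
  also have "\<dots> = restrict (\<lambda>i. s (f a) i \<oplus> s (\<Oplus>\<^bsub>M\<^esub>a\<in>F. f a) i) I"
    by (rule s_add[OF fa M.finsum_closed[OF fF]])
  also have "\<dots> = restrict (\<lambda>i. \<Oplus>a\<in>insert a F. s (f a) i) I"
  proof (rule restrict_ext)
    fix i assume i: "i \<in> I"
    have cl: "(\<lambda>a. s (f a) i) \<in> F \<rightarrow> carrier R" using fF sxi i by blast
    have "s (\<Oplus>\<^bsub>M\<^esub>a\<in>F. f a) i = (\<Oplus>a\<in>F. s (f a) i)" using insert(3)[OF fF] i by simp
    then show "s (f a) i \<oplus> s (\<Oplus>\<^bsub>M\<^esub>a\<in>F. f a) i = (\<Oplus>a\<in>insert a F. s (f a) i)"
      using insert(1,2) cl sxi[OF fa i] by (simp add: R.finsum_insert)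
  qed
  finally show ?case .
qed

lemma fm_sum:
  assumes "finite F" "\<And>k. k \<in> F \<Longrightarrow> g k \<in> free_mod R I"
  shows "restrict (\<lambda>i. \<Oplus>k\<in>F. g k i) I \<in> free_mod R I"
proof (rule fm_memI[where S="\<Union>k\<in>F. {i \<in> I. g k i \<noteq> \<zero>}"])
  have gk: "\<And>k i. k \<in> F \<Longrightarrow> i \<in> I \<Longrightarrow> g k i \<in> carrier R" using assms(2) unfolding free_mod_def by blast
  show "(\<lambda>i. \<Oplus>k\<in>F. g k i) \<in> I \<rightarrow> carrier R" using gk by (auto intro!: R.finsum_closed)
  show "finite (\<Union>k\<in>F. {i \<in> I. g k i \<noteq> \<zero>})" using assms unfolding free_mod_def by auto
  fix i assume i: "i \<in> I" "i \<notin> (\<Union>k\<in>F. {i \<in> I. g k i \<noteq> \<zero>})"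
  then have "\<And>k. k \<in> F \<Longrightarrow> g k i = \<zero>" by auto
  then have "(\<Oplus>k\<in>F. g k i) = (\<Oplus>k\<in>F. \<zero>)" by (intro R.finsum_cong'[OF refl]) auto
  then show "(\<Oplus>k\<in>F. g k i) = \<zero>" by simp
qed

lemma p_finsum:
  assumes "finite F" "\<And>k. k \<in> F \<Longrightarrow> g k \<in> free_mod R I"
  shows "p (restrict (\<lambda>i. \<Oplus>k\<in>F. g k i) I) = (\<Oplus>\<^bsub>M\<^esub>k\<in>F. p (g k))"
  using assms
proof (induct F rule: finite_induct)
  case empty
  have e0: "restrict (\<lambda>i. \<Oplus>k\<in>{}. g k i) I = restrict (\<lambda>i. \<zero>) I" by (rule restrict_ext) simp
  show ?case unfolding e0 p_zero by simp
next
  case (insert k F)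
  have gk: "g k \<in> free_mod R I" using insert(4) by simp
  have gF: "\<And>j. j \<in> F \<Longrightarrow> g j \<in> free_mod R I" using insert(4) by simp
  have gki: "\<And>j i. j \<in> insert k F \<Longrightarrow> i \<in> I \<Longrightarrow> g j i \<in> carrier R" using insert(4) unfolding free_mod_def by blast
  have S: "restrict (\<lambda>i. \<Oplus>k\<in>F. g k i) I \<in> free_mod R I" by (rule fm_sum[OF insert(1) gF])
  have "restrict (\<lambda>i. \<Oplus>k\<in>insert k F. g k i) I = restrict (\<lambda>i. g k i \<oplus> restrict (\<lambda>i. \<Oplus>k\<in>F. g k i) I i) I"
  proof (rule restrict_ext)
    fix i assume i: "i \<in> I"
    have cl: "(\<lambda>j. g j i) \<in> F \<rightarrow> carrier R" using gki i by blast
    show "(\<Oplus>k\<in>insert k F. g k i) = g k i \<oplus> restrict (\<lambda>i. \<Oplus>k\<in>F. g k i) I i"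
      using insert(1,2) cl gki[of k i] i by (simp add: R.finsum_insert)
  qed
  then have E1: "p (restrict (\<lambda>i. \<Oplus>k\<in>insert k F. g k i) I) = p (g k) \<oplus>\<^bsub>M\<^esub> p (restrict (\<lambda>i. \<Oplus>k\<in>F. g k i) I)"
    using p_add[OF gk S] by simp
  have IH: "p (restrict (\<lambda>i. \<Oplus>k\<in>F. g k i) I) = (\<Oplus>\<^bsub>M\<^esub>k\<in>F. p (g k))" by (rule insert(3)[OF gF])
  have E3: "p (g k) \<oplus>\<^bsub>M\<^esub> (\<Oplus>\<^bsub>M\<^esub>k\<in>F. p (g k)) = (\<Oplus>\<^bsub>M\<^esub>k\<in>insert k F. p (g k))"
    using insert(1,2) p_in gk gF by (auto simp: M.finsum_insert Pi_def)
  show ?case by (simp only: E1 IH E3)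
qed

end

context projset begin

lemma proj_DB:
  assumes A: "finite A" "A \<subseteq> carrier M"
    and gen: "\<And>x. x \<in> carrier M \<Longrightarrow> \<exists>c. c \<in> A \<rightarrow> carrier R \<and> x = (\<Oplus>\<^bsub>M\<^esub>a\<in>A. c a \<odot>\<^bsub>M\<^esub> a)"
  shows "\<exists>(K::'e set) w e. DB R M K w e"
proof -
  define J where "J = (\<Union>a\<in>A. {i \<in> I. s a i \<noteq> \<zero>})"
  have Jfin: "finite J" unfolding J_def using A sx unfolding free_mod_def by auto
  have JI: "J \<subseteq> I" unfolding J_def by auto
  define dl where "dl j = restrict (\<lambda>i. if i = j then \<one> else \<zero>) I" for j
  have dlf: "\<And>j. dl j \<in> free_mod R I" unfolding dl_def by (rule fm_memI[where S="{j}" for j]) auto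
  define w where "w j = restrict (\<lambda>x. s x j) (carrier M)" for j
  define e where "e j = p (dl j)" for j
  have wd: "\<And>j. j \<in> I \<Longrightarrow> w j \<in> dual_mod R M"
    unfolding dual_mod_def w_def using sxi s_add s_smult by auto
  have eM: "\<And>j. e j \<in> carrier M" unfolding e_def using p_in dlf by blast
  have van: "\<And>x i. x \<in> carrier M \<Longrightarrow> i \<in> I \<Longrightarrow> i \<notin> J \<Longrightarrow> s x i = \<zero>"
  proof -
    fix x i assume x: "x \<in> carrier M" and i: "i \<in> I" "i \<notin> J"
    obtain c where c: "c \<in> A \<rightarrow> carrier R" "x = (\<Oplus>\<^bsub>M\<^esub>a\<in>A. c a \<odot>\<^bsub>M\<^esub> a)" using gen[OF x] by blast
    have cl: "(\<lambda>a. c a \<odot>\<^bsub>M\<^esub> a) \<in> A \<rightarrow> carrier M" using c(1) A(2) by auto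
    have "s x i = (\<Oplus>a\<in>A. s (c a \<odot>\<^bsub>M\<^esub> a) i)" using s_finsum[OF A(1) cl] c(2) i(1) by simp
    also have "\<dots> = (\<Oplus>a\<in>A. \<zero>)"
    proof (rule R.finsum_cong'[OF refl])
      show "(\<lambda>a. \<zero>) \<in> A \<rightarrow> carrier R" by simp
      fix a assume a: "a \<in> A"
      have "s a i = \<zero>" using i a unfolding J_def by auto
      have ca: "c a \<in> carrier R" using c(1) a by blast
      have aM: "a \<in> carrier M" using A(2) a by blast
      have "s (c a \<odot>\<^bsub>M\<^esub> a) i = c a \<otimes> s a i" using s_smult[OF ca aM] i(1) by simp
      then show "s (c a \<odot>\<^bsub>M\<^esub> a) i = \<zero>" using \<open>s a i = \<zero>\<close> ca by simp
    qed
    finally show "s x i = \<zero>" by simp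
  qed
  have "DB R M J w e" unfolding DB_def
  proof (intro conjI ballI)
    show "finite J" by (rule Jfin)
    fix j assume "j \<in> J" then show "w j \<in> dual_mod R M" "e j \<in> carrier M" using wd JI eM by auto
  next
    fix x assume x: "x \<in> carrier M"
    define g where "g j = restrict (\<lambda>i. s x j \<otimes> dl j i) I" for j
    have sxj: "\<And>j. j \<in> J \<Longrightarrow> s x j \<in> carrier R" using sxi[OF x] JI by blast
    have gf: "\<And>j. j \<in> J \<Longrightarrow> g j \<in> free_mod R I"
      unfolding g_def dl_def by (rule fm_memI[where S="{j}" for j]) (use sxj in auto)
    have sxe: "s x = restrict (\<lambda>i. \<Oplus>j\<in>J. g j i) I"
    proof (rule extensionalityI[of _ I])
      show "s x \<in> extensional I" by (rule sx_ext[OF x])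
      show "restrict (\<lambda>i. \<Oplus>j\<in>J. g j i) I \<in> extensional I" by simp
      fix i assume i: "i \<in> I"
      have "(\<Oplus>j\<in>J. g j i) = (\<Oplus>j\<in>J. if i = j then s x j else \<zero>)"
        by (rule R.finsum_cong'[OF refl]) (use sxj i in \<open>auto simp: g_def dl_def\<close>)
      also have "\<dots> = s x i"
      proof (cases "i \<in> J")
        case True
        show ?thesis by (rule R.add.finprod_singleton[OF True Jfin]) (use sxj in auto)
      next
        case False
        have "(\<Oplus>j\<in>J. if i = j then s x j else \<zero>) = (\<Oplus>j\<in>J. \<zero>)"
          by (rule R.finsum_cong'[OF refl]) (use False in auto)
        then show ?thesis using van[OF x i False] by simp
      qed
      finally show "s x i = restrict (\<lambda>i. \<Oplus>j\<in>J. g j i) I i" using i by simp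
    qed
    have "x = p (s x)" using ps[OF x] by simp
    also have "\<dots> = p (restrict (\<lambda>i. \<Oplus>j\<in>J. g j i) I)" using sxe by simp
    also have "\<dots> = (\<Oplus>\<^bsub>M\<^esub>j\<in>J. p (g j))" by (rule p_finsum[OF Jfin gf])
    also have "\<dots> = (\<Oplus>\<^bsub>M\<^esub>j\<in>J. w j x \<odot>\<^bsub>M\<^esub> e j)"
    proof (rule M.finsum_cong'[OF refl])
      show "(\<lambda>j. w j x \<odot>\<^bsub>M\<^esub> e j) \<in> J \<rightarrow> carrier M" using sxj eM x by (auto simp: w_def)
      fix j assume j: "j \<in> J"
      show "p (g j) = w j x \<odot>\<^bsub>M\<^esub> e j"
        unfolding g_def e_def w_def using p_smult[OF sxj[OF j] dlf[of j]] x by simp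
    qed
    finally show "x = (\<Oplus>\<^bsub>M\<^esub>j\<in>J. w j x \<odot>\<^bsub>M\<^esub> e j)" .
  qed
  then show ?thesis by blast
qed

end

definition triv_ext :: "('r, 'c) ring_scheme \<Rightarrow> ('r, 'e, 'd) module_scheme \<Rightarrow> ('r \<times> 'e) ring" where
  "triv_ext R M = \<lparr>carrier = carrier R \<times> carrier M,
     mult = (\<lambda>u v. (fst u \<otimes>\<^bsub>R\<^esub> fst v, fst u \<odot>\<^bsub>M\<^esub> snd v \<oplus>\<^bsub>M\<^esub> fst v \<odot>\<^bsub>M\<^esub> snd u)),
     one = (\<one>\<^bsub>R\<^esub>, \<zero>\<^bsub>M\<^esub>), zero = (\<zero>\<^bsub>R\<^esub>, \<zero>\<^bsub>M\<^esub>),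
     add = (\<lambda>u v. (fst u \<oplus>\<^bsub>R\<^esub> fst v, snd u \<oplus>\<^bsub>M\<^esub> snd v))\<rparr>"

context module begin

abbreviation TE where "TE \<equiv> triv_ext R M"

lemma TE_simps:
  "carrier TE = carrier R \<times> carrier M"
  "(a, x) \<otimes>\<^bsub>TE\<^esub> (b, y) = (a \<otimes> b, a \<odot>\<^bsub>M\<^esub> y \<oplus>\<^bsub>M\<^esub> b \<odot>\<^bsub>M\<^esub> x)"
  "(a, x) \<oplus>\<^bsub>TE\<^esub> (b, y) = (a \<oplus> b, x \<oplus>\<^bsub>M\<^esub> y)"
  "\<one>\<^bsub>TE\<^esub> = (\<one>, \<zero>\<^bsub>M\<^esub>)" "\<zero>\<^bsub>TE\<^esub> = (\<zero>, \<zero>\<^bsub>M\<^esub>)"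
  by (simp_all add: triv_ext_def)

lemma TE_abelian: "abelian_group TE"
proof (rule abelian_groupI)
  fix u v w assume "u \<in> carrier TE" "v \<in> carrier TE" "w \<in> carrier TE"
  then obtain a x b y c z where uvw: "u = (a, x)" "v = (b, y)" "w = (c, z)"
    "a \<in> carrier R" "b \<in> carrier R" "c \<in> carrier R" "x \<in> carrier M" "y \<in> carrier M" "z \<in> carrier M"
    by (auto simp: TE_simps)
  then show "u \<oplus>\<^bsub>TE\<^esub> v \<oplus>\<^bsub>TE\<^esub> w = u \<oplus>\<^bsub>TE\<^esub> (v \<oplus>\<^bsub>TE\<^esub> w)"
    by (simp add: TE_simps R.a_assoc M.a_assoc)
next
  fix u v assume "u \<in> carrier TE" "v \<in> carrier TE"
  then obtain a x b y where uv: "u = (a, x)" "v = (b, y)"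
    "a \<in> carrier R" "b \<in> carrier R" "x \<in> carrier M" "y \<in> carrier M"
    by (auto simp: TE_simps)
  then show "u \<oplus>\<^bsub>TE\<^esub> v \<in> carrier TE" by (simp add: TE_simps)
  show "u \<oplus>\<^bsub>TE\<^esub> v = v \<oplus>\<^bsub>TE\<^esub> u" using uv by (simp add: TE_simps R.a_comm M.a_comm)
next
  show "\<zero>\<^bsub>TE\<^esub> \<in> carrier TE" by (simp add: TE_simps)
next
  fix u assume "u \<in> carrier TE"
  then obtain a x where u: "u = (a, x)" "a \<in> carrier R" "x \<in> carrier M" by (auto simp: TE_simps)
  then show "\<zero>\<^bsub>TE\<^esub> \<oplus>\<^bsub>TE\<^esub> u = u" by (simp add: TE_simps)
  show "\<exists>v\<in>carrier TE. v \<oplus>\<^bsub>TE\<^esub> u = \<zero>\<^bsub>TE\<^esub>"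
  proof (rule bexI[of _ "(\<ominus> a, \<ominus>\<^bsub>M\<^esub> x)"])
    show "(\<ominus> a, \<ominus>\<^bsub>M\<^esub> x) \<oplus>\<^bsub>TE\<^esub> u = \<zero>\<^bsub>TE\<^esub>" using u by (simp add: TE_simps R.l_neg M.l_neg)
    show "(\<ominus> a, \<ominus>\<^bsub>M\<^esub> x) \<in> carrier TE" using u by (simp add: TE_simps)
  qed
qed

lemma TE_comm_monoid: "comm_monoid TE"
proof (rule comm_monoidI)
  fix u v w assume "u \<in> carrier TE" "v \<in> carrier TE" "w \<in> carrier TE"
  then obtain a x b y c z where uvw: "u = (a, x)" "v = (b, y)" "w = (c, z)"
    and h: "a \<in> carrier R" "b \<in> carrier R" "c \<in> carrier R" "x \<in> carrier M" "y \<in> carrier M" "z \<in> carrier M"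
    by (auto simp: TE_simps)
  have "(a \<otimes> b) \<odot>\<^bsub>M\<^esub> z \<oplus>\<^bsub>M\<^esub> c \<odot>\<^bsub>M\<^esub> (a \<odot>\<^bsub>M\<^esub> y \<oplus>\<^bsub>M\<^esub> b \<odot>\<^bsub>M\<^esub> x)
      = a \<odot>\<^bsub>M\<^esub> (b \<odot>\<^bsub>M\<^esub> z \<oplus>\<^bsub>M\<^esub> c \<odot>\<^bsub>M\<^esub> y) \<oplus>\<^bsub>M\<^esub> (b \<otimes> c) \<odot>\<^bsub>M\<^esub> x"
  proof -
    have "c \<odot>\<^bsub>M\<^esub> (a \<odot>\<^bsub>M\<^esub> y \<oplus>\<^bsub>M\<^esub> b \<odot>\<^bsub>M\<^esub> x) = (a \<otimes> c) \<odot>\<^bsub>M\<^esub> y \<oplus>\<^bsub>M\<^esub> (b \<otimes> c) \<odot>\<^bsub>M\<^esub> x"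
      using h by (simp add: smult_r_distr smult_assoc1[symmetric] R.m_comm)
    moreover have "a \<odot>\<^bsub>M\<^esub> (b \<odot>\<^bsub>M\<^esub> z \<oplus>\<^bsub>M\<^esub> c \<odot>\<^bsub>M\<^esub> y) = (a \<otimes> b) \<odot>\<^bsub>M\<^esub> z \<oplus>\<^bsub>M\<^esub> (a \<otimes> c) \<odot>\<^bsub>M\<^esub> y"
      using h by (simp add: smult_r_distr smult_assoc1[symmetric])
    ultimately show ?thesis using h by (simp add: M.a_assoc)
  qed
  then show "u \<otimes>\<^bsub>TE\<^esub> v \<otimes>\<^bsub>TE\<^esub> w = u \<otimes>\<^bsub>TE\<^esub> (v \<otimes>\<^bsub>TE\<^esub> w)"
    using uvw h by (simp add: TE_simps R.m_assoc)
next
  fix u v assume "u \<in> carrier TE" "v \<in> carrier TE"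
  then obtain a x b y where uv: "u = (a, x)" "v = (b, y)"
    "a \<in> carrier R" "b \<in> carrier R" "x \<in> carrier M" "y \<in> carrier M"
    by (auto simp: TE_simps)
  then show "u \<otimes>\<^bsub>TE\<^esub> v \<in> carrier TE" by (simp add: TE_simps)
  show "u \<otimes>\<^bsub>TE\<^esub> v = v \<otimes>\<^bsub>TE\<^esub> u" using uv by (simp add: TE_simps R.m_comm M.a_comm)
next
  show "\<one>\<^bsub>TE\<^esub> \<in> carrier TE" by (simp add: TE_simps)
next
  fix u assume "u \<in> carrier TE"
  then obtain a x where u: "u = (a, x)" "a \<in> carrier R" "x \<in> carrier M" by (auto simp: TE_simps)
  then show "\<one>\<^bsub>TE\<^esub> \<otimes>\<^bsub>TE\<^esub> u = u" by (simp add: TE_simps)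
qed

lemma TE_cring: "cring TE"
proof (rule cringI[OF TE_abelian TE_comm_monoid])
  fix u v w assume "u \<in> carrier TE" "v \<in> carrier TE" "w \<in> carrier TE"
  then obtain a x b y c z where uvw: "u = (a, x)" "v = (b, y)" "w = (c, z)"
    and h: "a \<in> carrier R" "b \<in> carrier R" "c \<in> carrier R" "x \<in> carrier M" "y \<in> carrier M" "z \<in> carrier M"
    by (auto simp: TE_simps)
  have "(a \<oplus> b) \<odot>\<^bsub>M\<^esub> z \<oplus>\<^bsub>M\<^esub> c \<odot>\<^bsub>M\<^esub> (x \<oplus>\<^bsub>M\<^esub> y)
      = (a \<odot>\<^bsub>M\<^esub> z \<oplus>\<^bsub>M\<^esub> c \<odot>\<^bsub>M\<^esub> x) \<oplus>\<^bsub>M\<^esub> (b \<odot>\<^bsub>M\<^esub> z \<oplus>\<^bsub>M\<^esub> c \<odot>\<^bsub>M\<^esub> y)"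
    using h by (simp add: smult_l_distr smult_r_distr M.a_ac)
  then show "(u \<oplus>\<^bsub>TE\<^esub> v) \<otimes>\<^bsub>TE\<^esub> w = u \<otimes>\<^bsub>TE\<^esub> w \<oplus>\<^bsub>TE\<^esub> v \<otimes>\<^bsub>TE\<^esub> w"
    using uvw h by (simp add: TE_simps R.l_distr)
qed

definition phiTE where "phiTE a = (a, \<zero>\<^bsub>M\<^esub>)"

lemma phiTE_hom: "phiTE \<in> ring_hom R TE"
proof (rule ring_hom_memI)
  fix a assume "a \<in> carrier R" then show "phiTE a \<in> carrier TE" by (simp add: phiTE_def TE_simps)
next
  fix a b assume "a \<in> carrier R" "b \<in> carrier R"
  then show "phiTE (a \<otimes> b) = phiTE a \<otimes>\<^bsub>TE\<^esub> phiTE b" "phiTE (a \<oplus> b) = phiTE a \<oplus>\<^bsub>TE\<^esub> phiTE b"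
    by (simp_all add: phiTE_def TE_simps)
next
  show "phiTE \<one> = \<one>\<^bsub>TE\<^esub>" by (simp add: phiTE_def TE_simps)
qed

lemma iota_hom: "restrict (\<lambda>x. (\<zero>, x)) (carrier M) \<in> hom_to_alg R M TE phiTE"
  unfolding hom_to_alg_def
proof (intro CollectI conjI ballI)
  show "restrict (\<lambda>x. (\<zero>, x)) (carrier M) \<in> extensional (carrier M)" by simp
  show "restrict (\<lambda>x. (\<zero>, x)) (carrier M) \<in> carrier M \<rightarrow> carrier TE" by (auto simp: TE_simps)
next
  fix x y assume "x \<in> carrier M" "y \<in> carrier M"
  then show "restrict (\<lambda>x. (\<zero>, x)) (carrier M) (x \<oplus>\<^bsub>M\<^esub> y) =
    restrict (\<lambda>x. (\<zero>, x)) (carrier M) x \<oplus>\<^bsub>TE\<^esub> restrict (\<lambda>x. (\<zero>, x)) (carrier M) y"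
    by (simp add: TE_simps)
next
  fix a x assume "a \<in> carrier R" "x \<in> carrier M"
  then show "restrict (\<lambda>x. (\<zero>, x)) (carrier M) (a \<odot>\<^bsub>M\<^esub> x) =
    phiTE a \<otimes>\<^bsub>TE\<^esub> restrict (\<lambda>x. (\<zero>, x)) (carrier M) x"
    by (simp add: TE_simps phiTE_def)
qed

end

context module begin

lemma dual_pow:
  assumes "w \<in> dual_mod R M"
  shows "restrict (\<lambda>x. add_pow R (n::int) (w x)) (carrier M) \<in> dual_mod R M"
  unfolding dual_mod_def
proof (intro CollectI conjI ballI)
  note d = dual_memD[OF assms]
  show "restrict (\<lambda>x. add_pow R n (w x)) (carrier M) \<in> extensional (carrier M)" by simp
  show "restrict (\<lambda>x. add_pow R n (w x)) (carrier M) \<in> carrier M \<rightarrow> carrier R" using d(2) by auto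
  fix x y assume xy: "x \<in> carrier M" "y \<in> carrier M"
  then show "restrict (\<lambda>x. add_pow R n (w x)) (carrier M) (x \<oplus>\<^bsub>M\<^esub> y) =
    restrict (\<lambda>x. add_pow R n (w x)) (carrier M) x \<oplus> restrict (\<lambda>x. add_pow R n (w x)) (carrier M) y"
    using d(2,3) by (simp add: R.add.int_pow_distrib)
next
  note d = dual_memD[OF assms]
  fix a x assume ax: "a \<in> carrier R" "x \<in> carrier M"
  then show "restrict (\<lambda>x. add_pow R n (w x)) (carrier M) (a \<odot>\<^bsub>M\<^esub> x) =
    a \<otimes> restrict (\<lambda>x. add_pow R n (w x)) (carrier M) x"
    using d(2,4) by (simp add: R.add_pow_rdistr_int)
qed

lemma TE_snd_add: "snd (u \<oplus>\<^bsub>TE\<^esub> v) = snd u \<oplus>\<^bsub>M\<^esub> snd v" by (simp add: triv_ext_def)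
lemma TE_snd_zero: "snd \<zero>\<^bsub>TE\<^esub> = \<zero>\<^bsub>M\<^esub>" by (simp add: triv_ext_def)
lemma TE_snd_mult: "snd (u \<otimes>\<^bsub>TE\<^esub> v) = fst u \<odot>\<^bsub>M\<^esub> snd v \<oplus>\<^bsub>M\<^esub> fst v \<odot>\<^bsub>M\<^esub> snd u" by (simp add: triv_ext_def)

lemma TE_snd_finsum:
  assumes "finite S" "f \<in> S \<rightarrow> carrier TE"
  shows "snd (finsum TE f S) = (\<Oplus>\<^bsub>M\<^esub>p\<in>S. snd (f p))"
  using assms
proof (induct S rule: finite_induct)
  case empty
  have "finsum TE f {} = \<zero>\<^bsub>TE\<^esub>" using abelian_monoid.finsum_empty[OF abelian_group.axioms(1)[OF TE_abelian]] .
  then show ?case by (simp add: TE_snd_zero)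
next
  case (insert a F)
  have fa: "f a \<in> carrier TE" and fF: "f \<in> F \<rightarrow> carrier TE" using insert(4) by auto
  have sc: "(\<lambda>p. snd (f p)) \<in> F \<rightarrow> carrier M"
  proof (rule funcsetI)
    fix p assume "p \<in> F"
    then have "f p \<in> carrier R \<times> carrier M" using fF by (auto simp: TE_simps)
    then show "snd (f p) \<in> carrier M" by (auto simp: mem_Times_iff)
  qed
  have "finsum TE f (insert a F) = f a \<oplus>\<^bsub>TE\<^esub> finsum TE f F"
    using abelian_monoid.finsum_insert[OF abelian_group.axioms(1)[OF TE_abelian] insert(1,2) fF fa] .
  then have "snd (finsum TE f (insert a F)) = snd (f a) \<oplus>\<^bsub>M\<^esub> snd (finsum TE f F)" by (simp add: TE_snd_add)
  also have "\<dots> = snd (f a) \<oplus>\<^bsub>M\<^esub> (\<Oplus>\<^bsub>M\<^esub>p\<in>F. snd (f p))" using insert(3)[OF fF] by simp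
  also have "\<dots> = (\<Oplus>\<^bsub>M\<^esub>p\<in>insert a F. snd (f p))"
    using insert(1,2) sc fa by (simp add: M.finsum_insert TE_simps mem_Times_iff)
  finally show ?case .
qed

lemma TE_snd_pow:
  assumes "v \<in> carrier TE"
  shows "snd (add_pow TE (n::int) v) = add_pow M n (snd v)"
proof -
  have h: "snd \<in> hom (add_monoid TE) (add_monoid M)"
    unfolding hom_def by (auto simp: TE_simps TE_snd_add)
  have "snd (pow (add_monoid TE) v n) = pow (add_monoid M) (snd v) n"
    by (rule hom_int_pow[OF h _ abelian_group.a_group[OF TE_abelian] M.a_group]) (use assms in simp)
  then show ?thesis unfolding add_pow_def .
qed

lemma smult_pow:
  assumes "a \<in> carrier R" "v \<in> carrier M"
  shows "add_pow M (n::int) (a \<odot>\<^bsub>M\<^esub> v) = add_pow R n a \<odot>\<^bsub>M\<^esub> v"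
proof -
  have h: "(\<lambda>a. a \<odot>\<^bsub>M\<^esub> v) \<in> hom (add_monoid R) (add_monoid M)"
    unfolding hom_def using assms(2) by (auto simp: smult_l_distr)
  have "(\<lambda>a. a \<odot>\<^bsub>M\<^esub> v) (pow (add_monoid R) a n) = pow (add_monoid M) (a \<odot>\<^bsub>M\<^esub> v) n"
    by (rule hom_int_pow[OF h _ R.a_group M.a_group]) (use assms in simp)
  then show ?thesis unfolding add_pow_def by simp
qed

end

context module begin

lemma TE_DB:
  assumes iso: "canon_iso R M TE phiTE"
  shows "\<exists>J W. DB R M J W id \<and> J \<subseteq> carrier M"
proof -
  interpret T: tens R M TE phiTE
    by (intro tens.intro tens_axioms.intro TE_cring phiTE_hom) unfold_locales
  let ?io = "restrict (\<lambda>x. (\<zero>, x)) (carrier M)"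
  have img: "canon_map R M TE phiTE ` tensor_dual R M TE phiTE = hom_to_alg R M TE phiTE"
    using iso unfolding canon_iso_def bij_betw_def by (rule conjunct2)
  have "?io \<in> canon_map R M TE phiTE ` tensor_dual R M TE phiTE" unfolding img by (rule iota_hom)
  then obtain X where X0: "X \<in> tensor_dual R M TE phiTE" "?io = canon_map R M TE phiTE X" by (rule imageE)
  have X: "X \<in> T.TF // T.ER" "canon_map R M TE phiTE X = ?io" using X0 unfolding T.td_eq by simp_all
  obtain c where c: "X = T.ER `` {c}" "c \<in> T.TF" using X(1) by (rule quotientE)
  have cr: "canon_rep R M TE phiTE c = ?io" using X(2) T.canon_map_class[OF c(2)] c(1) by simp
  define S where "S = {p. c p \<noteq> 0}"
  have S: "finite S" "S \<subseteq> dual_mod R M \<times> carrier TE" using c(2) unfolding S_def T.TF_iff by auto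
  define w where "w = (\<lambda>p. restrict (\<lambda>x. add_pow R (c p) (fst p x)) (carrier M))"
  have pS: "\<And>p. p \<in> S \<Longrightarrow> fst p \<in> dual_mod R M \<and> fst (snd p) \<in> carrier R \<and> snd (snd p) \<in> carrier M"
  proof -
    fix p assume "p \<in> S"
    moreover have "S \<subseteq> dual_mod R M \<times> (carrier R \<times> carrier M)" using S(2) unfolding TE_simps(1) .
    ultimately have "p \<in> dual_mod R M \<times> (carrier R \<times> carrier M)" by (rule subsetD[rotated])
    then show "fst p \<in> dual_mod R M \<and> fst (snd p) \<in> carrier R \<and> snd (snd p) \<in> carrier M"
      by (simp add: mem_Times_iff)
  qed
  have "DB R M S w (\<lambda>p. snd (snd p))" unfolding DB_def
  proof (intro conjI ballI)
    show "finite S" by (rule S(1))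
    fix p assume p: "p \<in> S"
    show "w p \<in> dual_mod R M" unfolding w_def using dual_pow pS[OF p] by blast
    show "snd (snd p) \<in> carrier M" using pS[OF p] by blast
  next
    fix x assume x: "x \<in> carrier M"
    have fx: "\<And>p. p \<in> S \<Longrightarrow> fst p x \<in> carrier R" using pS dual_memD(2) x by blast
    have "x = snd (canon_rep R M TE phiTE c x)" using cr x by simp
    also have "canon_rep R M TE phiTE c x = finsum TE (\<lambda>p. add_pow TE (c p) ((phiTE (fst p x) \<otimes>\<^bsub>TE\<^esub> snd p))) S"
      unfolding canon_rep_def S_def using x by simp
    also have "snd \<dots> = (\<Oplus>\<^bsub>M\<^esub>p\<in>S. snd (add_pow TE (c p) ((phiTE (fst p x) \<otimes>\<^bsub>TE\<^esub> snd p))))"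
      by (rule TE_snd_finsum[OF S(1) T.tmp_Pi[OF S(2) x]])
    also have "\<dots> = (\<Oplus>\<^bsub>M\<^esub>p\<in>S. w p x \<odot>\<^bsub>M\<^esub> snd (snd p))"
    proof (rule M.finsum_cong'[OF refl])
      show "(\<lambda>p. w p x \<odot>\<^bsub>M\<^esub> snd (snd p)) \<in> S \<rightarrow> carrier M"
      proof (rule funcsetI)
        fix p assume p: "p \<in> S"
        have "w p x \<in> carrier R" unfolding w_def using x fx[OF p] by simp
        then show "w p x \<odot>\<^bsub>M\<^esub> snd (snd p) \<in> carrier M" using pS[OF p] by simp
      qed
      fix p assume p: "p \<in> S"
      have tmc: "(phiTE (fst p x) \<otimes>\<^bsub>TE\<^esub> snd p) \<in> carrier TE" using T.tm_closed S(2) p x by blast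
      have "snd ((phiTE (fst p x) \<otimes>\<^bsub>TE\<^esub> snd p)) = fst p x \<odot>\<^bsub>M\<^esub> snd (snd p)"
        using pS[OF p] fx[OF p] by (simp add: TE_snd_mult phiTE_def)
      then have "snd (add_pow TE (c p) ((phiTE (fst p x) \<otimes>\<^bsub>TE\<^esub> snd p))) = add_pow M (c p) (fst p x \<odot>\<^bsub>M\<^esub> snd (snd p))"
        using TE_snd_pow[OF tmc] by simp
      also have "\<dots> = add_pow R (c p) (fst p x) \<odot>\<^bsub>M\<^esub> snd (snd p)"
        using smult_pow[OF fx[OF p], of "snd (snd p)" "c p"] pS[OF p] by simp
      finally show "snd (add_pow TE (c p) ((phiTE (fst p x) \<otimes>\<^bsub>TE\<^esub> snd p))) = w p x \<odot>\<^bsub>M\<^esub> snd (snd p)"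
        unfolding w_def using x by simp
    qed
    finally show "x = (\<Oplus>\<^bsub>M\<^esub>p\<in>S. w p x \<odot>\<^bsub>M\<^esub> snd (snd p))" .
  qed
  then show ?thesis by (rule DB_merge)
qed

end

theorem mainTheorem4:
  fixes R :: "'r ring" and E :: "('r, 'e) module"
  assumes "module R E"
  shows "(fin_type R E \<and> projective_mod R E \<longrightarrow>
            (\<forall>(B :: 'b ring) phi. cring B \<and> phi \<in> ring_hom R B \<longrightarrow> canon_iso R E B phi))
       \<and> ((\<forall>(B :: ('r \<times> 'e) ring) phi. cring B \<and> phi \<in> ring_hom R B \<longrightarrow> canon_iso R E B phi)
            \<longrightarrow> fin_type R E \<and> projective_mod R E)"
proof (intro conjI impI allI)
  interpret E: module R E by (rule assms)
  fix B :: "'b ring" and phi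
  assume fp: "fin_type R E \<and> projective_mod R E" and Bp: "cring B \<and> phi \<in> ring_hom R B"
  obtain A where A: "finite A" "A \<subseteq> carrier E"
    "\<And>x. x \<in> carrier E \<Longrightarrow> \<exists>c. c \<in> A \<rightarrow> carrier R \<and> x = (\<Oplus>\<^bsub>E\<^esub>a\<in>A. c a \<odot>\<^bsub>E\<^esub> a)"
    using fp unfolding fin_type_def by blast
  obtain I :: "'e set" and s p where ps: "s \<in> carrier E \<rightarrow> free_mod R I" "p \<in> free_mod R I \<rightarrow> carrier E"
    "\<forall>x\<in>carrier E. \<forall>y\<in>carrier E. s (x \<oplus>\<^bsub>E\<^esub> y) = restrict (\<lambda>i. s x i \<oplus>\<^bsub>R\<^esub> s y i) I"
    "\<forall>a\<in>carrier R. \<forall>x\<in>carrier E. s (a \<odot>\<^bsub>E\<^esub> x) = restrict (\<lambda>i. a \<otimes>\<^bsub>R\<^esub> s x i) I"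
    "\<forall>g\<in>free_mod R I. \<forall>h\<in>free_mod R I. p (restrict (\<lambda>i. g i \<oplus>\<^bsub>R\<^esub> h i) I) = p g \<oplus>\<^bsub>E\<^esub> p h"
    "\<forall>a\<in>carrier R. \<forall>g\<in>free_mod R I. p (restrict (\<lambda>i. a \<otimes>\<^bsub>R\<^esub> g i) I) = a \<odot>\<^bsub>E\<^esub> p g"
    "\<forall>x\<in>carrier E. p (s x) = x"
    using fp unfolding projective_mod_def by blast
  interpret P: projset R E I s p
    by (rule projset.intro[OF assms projset_axioms.intro]) (use ps in auto)
  have "\<exists>(K::'e set) w e. DB R E K w e"
    by (rule P.proj_DB[of A]) (fact A(1), fact A(2), rule A(3))
  then obtain K :: "'e set" and w e where db: "DB R E K w e" by blast
  interpret T: tensDB R E B phi K w e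
    by (rule tensDB.intro[OF tens.intro[OF assms] tensDB_axioms.intro])
       (use Bp db in \<open>auto intro: tens_axioms.intro\<close>)
  show "canon_iso R E B phi" by (rule T.iso)
next
  interpret E: module R E by (rule assms)
  assume H: "\<forall>(B :: ('r \<times> 'e) ring) phi. cring B \<and> phi \<in> ring_hom R B \<longrightarrow> canon_iso R E B phi"
  have "canon_iso R E (triv_ext R E) E.phiTE" using H E.TE_cring E.phiTE_hom by blast
  then obtain J W where "DB R E J W id" "J \<subseteq> carrier E" using E.TE_DB by blast
  then show "fin_type R E" "projective_mod R E" using E.DB_fin_proj by blast+
qed

end
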